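(* Assume the regularity estimate $t\|u'(t)\|+t^2\|u''(t)\|+t^3\|u'''(t)\|\le Ct^\sigma$ ($t>0$) holds for some $\sigma>0$, and the time mesh is $t_n=(n\tau)^\gamma$ with $\gamma\ge1$. Then for $1\le n\le N$, with $\delta=\sigma-2/\gamma$, \[ \|\psi^n\|\le\|\psi\|_{I_n}\le C\times\begin{cases}\tau^2\log(t_n/t_1),&\text{if }\gamma=2/\sigma,\\ \tau^{\min(\gamma\sigma,2)}t_n^{\max(0,\delta)},&\text{if }\gamma\ne2/\sigma,\end{cases} \] where $\|\psi\|_{I_n}=\sup_{t\in I_n}\|\psi(t)\|$.
   Context: $\Omega\subset\mathbb{R}^d$ ($d\le3$) convex polyhedron, $0<\alpha<1$, $\kappa\in W^{1,\infty}(\Omega)$, $\kappa\ge\kappa_{\min}>0$, $\mathcal{A}w=-\nabla\cdot(\kappa\nabla w)$; $u$ solves $\partial_t^\alpha u+\mathcal{A}u=f$ on $\Omega\times(0,T]$ with $u=0$ on $\partial\Omega$, $u(0)=u_0$ (Caputo derivative $\partial_t^\alpha v(t)=\int_0^t\frac{(t-s)^{-\alpha}}{\Gamma(1-\alpha)}v'(s)\,ds$). $\|\cdot\|$ is the $L^2(\Omega)$ norm. Time mesh $t_n=(n\tau)^\gamma$, $0\le n\le N$, $\tau=T^{1/\gamma}/N$, $\tau_n=t_n-t_{n-1}$, $I_n=(t_{n-1},t_n)$. $\widehat u$ is continuous on $[0,T]$, linear on each $\overline{I_n}$, $\widehat u(0)=u_0$, $\int_{I_n}\widehat u\,dt=\int_{I_n}u\,dt$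 for $1\le n\le N$; $\psi=u-\widehat u$, $\psi^n=\psi(t_n)$. $C$ is a generic constant, bounded for $0<\alpha\le1$, independent of $N,\tau$. *)

theory Defs
  imports "HOL-Analysis.Analysis"
begin

definition tstep :: "real \<Rightarrow> real \<Rightarrow> nat \<Rightarrow> real" where
  "tstep T \<gamma> N = T powr (1 / \<gamma>) / real N"

definition mesh :: "real \<Rightarrow> real \<Rightarrow> nat \<Rightarrow> nat \<Rightarrow> real" where
  "mesh T \<gamma> N n = (real n * tstep T \<gamma> N) powr \<gamma>"

definition is_avg_interp ::
  "(real \<Rightarrow> 'a::real_normed_vector) \<Rightarrow> (nat \<Rightarrow> real) \<Rightarrow> nat \<Rightarrow> (real \<Rightarrow> 'a) \<Rightarrow> bool" where
  "is_avg_interp u t N uh \<longleftrightarrow>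
     continuous_on {0 .. t N} uh \<and>
     uh 0 = u 0 \<and>
     (\<forall>n\<in>{1..N}. \<forall>s\<in>{t (n-1) .. t n}.
        uh s = ((t n - s) / (t n - t (n-1))) *\<^sub>R uh (t (n-1))
             + ((s - t (n-1)) / (t n - t (n-1))) *\<^sub>R uh (t n)) \<and>
     (\<forall>n\<in>{1..N}. integral {t (n-1) .. t n} uh = integral {t (n-1) .. t n} u)"

end

theory Submission
  imports Defs
begin

lemma mvb:
  fixes f :: "real \<Rightarrow> 'a::real_normed_vector"
  assumes "\<And>s. s \<in> {lo..hi} \<Longrightarrow> (f has_vector_derivative f' s) (at s within {lo..hi})"
    and "\<And>s. s \<in> {lo..hi} \<Longrightarrow> norm (f' s) \<le> B"
    and "x \<in> {lo..hi}" "y \<in> {lo..hi}"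
  shows "norm (f x - f y) \<le> B * \<bar>x - y\<bar>"
proof -
  have "norm (f x - f y) \<le> B * norm (x - y)"
  proof (rule differentiable_bound[where f'="\<lambda>s h. h *\<^sub>R f' s"])
    show "convex {lo..hi}" by simp
    show "(f has_derivative (\<lambda>h. h *\<^sub>R f' s)) (at s within {lo..hi})" if "s \<in> {lo..hi}" for s
      using assms(1)[OF that] by (simp add: has_vector_derivative_def)
    show "onorm (\<lambda>h. h *\<^sub>R f' s) \<le> B" if "s \<in> {lo..hi}" for s
      using assms(2)[OF that] onorm_scaleR_left[OF bounded_linear_ident, of "f' s"]
      by (simp add: onorm_id)
  qed (use assms in auto)
  thus ?thesis by simp
qed

lemma taylor2:
  fixes f :: "real \<Rightarrow> 'a::real_normed_vector"
  assumes d1: "\<And>s. s \<in> {lo..hi} \<Longrightarrow> (f has_vector_derivative f1 s) (at s within {lo..hi})"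
    and d2: "\<And>s. s \<in> {lo..hi} \<Longrightarrow> (f1 has_vector_derivative f2 s) (at s within {lo..hi})"
    and K: "\<And>s. s \<in> {lo..hi} \<Longrightarrow> norm (f2 s) \<le> K"
    and a: "a \<in> {lo..hi}" and x: "x \<in> {lo..hi}"
  shows "norm (f x - f a - (x - a) *\<^sub>R f1 a) \<le> K * (x - a)^2"
proof -
  let ?l = "min a x" and ?h = "max a x"
  have sub: "{?l..?h} \<subseteq> {lo..hi}" using a x by auto
  let ?g = "\<lambda>y. f y - f a - (y - a) *\<^sub>R f1 a"
  have "norm (?g x - ?g a) \<le> (K * \<bar>x - a\<bar>) * \<bar>x - a\<bar>"
  proof (rule mvb[where f' = "\<lambda>y. f1 y - f1 a"])
    show "(?g has_vector_derivative f1 s - f1 a) (at s within {?l..?h})" if "s \<in> {?l..?h}" for s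
    proof -
      have "s \<in> {lo..hi}" using that sub by blast
      from has_vector_derivative_within_subset[OF d1[OF this] sub]
      show ?thesis by (auto intro!: derivative_eq_intros)
    qed
    show "norm (f1 s - f1 a) \<le> K * \<bar>x - a\<bar>" if "s \<in> {?l..?h}" for s
    proof -
      have "norm (f1 s - f1 a) \<le> K * \<bar>s - a\<bar>"
        by (rule mvb[OF d2 K]) (use that sub a in auto)
      also have "\<dots> \<le> K * \<bar>x - a\<bar>"
        apply (rule mult_left_mono) using that apply auto
        using K[OF a] norm_ge_zero order_trans by blast
      finally show ?thesis .
    qed
  qed auto
  thus ?thesis by (simp add: power2_eq_square mult_ac)
qed

lemma taylor3:
  fixes f :: "real \<Rightarrow> 'a::real_normed_vector"
  assumes d1: "\<And>s. s \<in> {lo..hi} \<Longrightarrow> (f has_vector_derivative f1 s) (at s within {lo..hi})"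
    and d2: "\<And>s. s \<in> {lo..hi} \<Longrightarrow> (f1 has_vector_derivative f2 s) (at s within {lo..hi})"
    and d3: "\<And>s. s \<in> {lo..hi} \<Longrightarrow> (f2 has_vector_derivative f3 s) (at s within {lo..hi})"
    and K: "\<And>s. s \<in> {lo..hi} \<Longrightarrow> norm (f3 s) \<le> K"
    and a: "a \<in> {lo..hi}" and x: "x \<in> {lo..hi}"
  shows "norm (f x - f a - (x - a) *\<^sub>R f1 a - ((x - a)^2 / 2) *\<^sub>R f2 a) \<le> K * \<bar>x - a\<bar>^3"
proof -
  let ?l = "min a x" and ?h = "max a x"
  have sub: "{?l..?h} \<subseteq> {lo..hi}" using a x by auto
  let ?g = "\<lambda>y. f y - f a - (y - a) *\<^sub>R f1 a - ((y - a)^2 / 2) *\<^sub>R f2 a"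
  have "norm (?g x - ?g a) \<le> (K * (x - a)^2) * \<bar>x - a\<bar>"
  proof (rule mvb[where f' = "\<lambda>y. f1 y - f1 a - (y - a) *\<^sub>R f2 a"])
    show "(?g has_vector_derivative f1 s - f1 a - (s - a) *\<^sub>R f2 a) (at s within {?l..?h})" if "s \<in> {?l..?h}" for s
    proof -
      have "s \<in> {lo..hi}" using that sub by blast
      from has_vector_derivative_within_subset[OF d1[OF this] sub]
      show ?thesis
        apply -
        apply (rule has_vector_derivative_eq_rhs)
        by (auto intro!: derivative_eq_intros)
    qed
    show "norm (f1 s - f1 a - (s - a) *\<^sub>R f2 a) \<le> K * (x - a)^2" if "s \<in> {?l..?h}" for s
    proof -
      have "norm (f1 s - f1 a - (s - a) *\<^sub>R f2 a) \<le> K * (s - a)^2"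
        by (rule taylor2[OF d2 d3 K]) (use that sub a in auto)
      also have "\<dots> \<le> K * (x - a)^2"
        apply (rule mult_left_mono) using that apply (auto intro!: power_mono simp: abs_le_square_iff[symmetric])
        using K[OF a] norm_ge_zero order_trans by blast
      finally show ?thesis .
    qed
  qed auto
  thus ?thesis by (simp add: power2_eq_square power3_eq_cube mult_ac abs_mult)
qed

lemma deriv_cont_on:
  assumes "\<And>s. s \<in> S \<Longrightarrow> (f has_vector_derivative f1 s) (at s within S)"
  shows "continuous_on S f"
  using assms continuous_on_eq_continuous_within has_vector_derivative_continuous by blast

lemma has_integral_combine_rnv:
  fixes f :: "real \<Rightarrow> 'a::real_normed_vector"
  assumes "a \<le> c" "c \<le> b" and ac: "(f has_integral i) {a..c}" and cb: "(f has_integral j) {c..b}"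
  shows "(f has_integral (i + j)) {a..b}"
proof -
  have e1: "cbox a b \<inter> {x. x \<bullet> 1 \<le> c} = {a..c}" using assms by auto
  have e2: "cbox a b \<inter> {x. x \<bullet> 1 \<ge> c} = {c..b}" using assms by auto
  have "(f has_integral (i + j)) (cbox a b)"
    by (rule has_integral_split[where k=1 and c=c]) (use ac cb e1 e2 in auto)
  then show ?thesis by simp
qed

lemma integrable_ulim:
  fixes f :: "real \<Rightarrow> 'a::{real_normed_vector, complete_space}"
  assumes approx: "\<And>\<epsilon>. \<epsilon> > 0 \<Longrightarrow> \<exists>g. (\<forall>x\<in>{a..b}. norm (f x - g x) \<le> \<epsilon>) \<and> g integrable_on {a..b}"
  shows "f integrable_on {a..b}"
proof -
  have "f integrable_on cbox a b"
  proof (subst integrable_Cauchy, intro allI impI)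
    fix e :: real assume e: "e > 0"
    define c where "c = measure lborel (cbox a b)"
    have c0: "c \<ge> 0" by (simp add: c_def)
    define \<epsilon> where "\<epsilon> = e / (4 * (c + 1))"
    have \<epsilon>0: "\<epsilon> > 0" using e c0 by (simp add: \<epsilon>_def)
    have \<epsilon>c: "\<epsilon> * c \<le> e / 4"
    proof -
      have "\<epsilon> * c \<le> \<epsilon> * (c + 1)" using \<epsilon>0 by simp
      also have "\<dots> = e / 4"
      proof -
        have "c + 1 > 0" using c0 by simp
        then show ?thesis by (simp add: \<epsilon>_def field_simps)
      qed
      finally show ?thesis .
    qed
    obtain g where g1: "\<forall>x\<in>{a..b}. norm (f x - g x) \<le> \<epsilon>" and g2: "g integrable_on {a..b}"
      using approx[OF \<epsilon>0] by blast
    have "g integrable_on cbox a b" using g2 by simp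
    then obtain \<gamma> where \<gamma>: "gauge \<gamma>" and
      C: "\<And>D1 D2. D1 tagged_division_of (cbox a b) \<Longrightarrow> \<gamma> fine D1 \<Longrightarrow>
            D2 tagged_division_of (cbox a b) \<Longrightarrow> \<gamma> fine D2 \<Longrightarrow>
            norm ((\<Sum>(x,K)\<in>D1. measure lborel K *\<^sub>R g x) - (\<Sum>(x,K)\<in>D2. measure lborel K *\<^sub>R g x)) < e/2"
      unfolding integrable_Cauchy using e by (meson half_gt_zero)
    show "\<exists>\<gamma>. gauge \<gamma> \<and> (\<forall>D1 D2. D1 tagged_division_of cbox a b \<and> \<gamma> fine D1 \<and>
            D2 tagged_division_of cbox a b \<and> \<gamma> fine D2 \<longrightarrow>
            norm ((\<Sum>(x,K)\<in>D1. measure lborel K *\<^sub>R f x) - (\<Sum>(x,K)\<in>D2. measure lborel K *\<^sub>R f x)) < e)"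
    proof (intro exI conjI allI impI)
      show "gauge \<gamma>" by fact
      fix D1 D2 assume H: "D1 tagged_division_of cbox a b \<and> \<gamma> fine D1 \<and> D2 tagged_division_of cbox a b \<and> \<gamma> fine D2"
      have g1': "\<forall>x\<in>cbox a b. norm (f x - g x) \<le> \<epsilon>" using g1 by simp
      have r1: "norm ((\<Sum>(x,K)\<in>D1. measure lborel K *\<^sub>R f x) - (\<Sum>(x,K)\<in>D1. measure lborel K *\<^sub>R g x)) \<le> \<epsilon> * c"
        unfolding c_def using rsum_diff_bound[OF _ g1'] H by blast
      have r2: "norm ((\<Sum>(x,K)\<in>D2. measure lborel K *\<^sub>R f x) - (\<Sum>(x,K)\<in>D2. measure lborel K *\<^sub>R g x)) \<le> \<epsilon> * c"
        unfolding c_def using rsum_diff_bound[OF _ g1'] H by blast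
      have r3: "norm ((\<Sum>(x,K)\<in>D1. measure lborel K *\<^sub>R g x) - (\<Sum>(x,K)\<in>D2. measure lborel K *\<^sub>R g x)) < e/2"
        using C H by blast
      define A1 where "A1 = (\<Sum>(x,K)\<in>D1. measure lborel K *\<^sub>R f x)"
      define A2 where "A2 = (\<Sum>(x,K)\<in>D2. measure lborel K *\<^sub>R f x)"
      define B1 where "B1 = (\<Sum>(x,K)\<in>D1. measure lborel K *\<^sub>R g x)"
      define B2 where "B2 = (\<Sum>(x,K)\<in>D2. measure lborel K *\<^sub>R g x)"
      have "norm (A1 - A2) \<le> norm (A1 - B1) + norm (B1 - B2) + norm (A2 - B2)"
      proof -
        have "A1 - A2 = (A1 - B1) + (B1 - B2) - (A2 - B2)" by simp
        then have "norm (A1 - A2) \<le> norm ((A1 - B1) + (B1 - B2)) + norm (A2 - B2)"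
          using norm_triangle_ineq4[of "(A1 - B1) + (B1 - B2)" "A2 - B2"] by simp
        also have "\<dots> \<le> norm (A1 - B1) + norm (B1 - B2) + norm (A2 - B2)"
          using norm_triangle_ineq[of "A1 - B1" "B1 - B2"] by simp
        finally show ?thesis .
      qed
      also have "\<dots> < e/4 + e/2 + e/4"
        using r1 r2 r3 \<epsilon>c unfolding A1_def A2_def B1_def B2_def by linarith
      finally show "norm ((\<Sum>(x,K)\<in>D1. measure lborel K *\<^sub>R f x) - (\<Sum>(x,K)\<in>D2. measure lborel K *\<^sub>R f x)) < e"
        unfolding A1_def A2_def by simp
    qed
  qed
  then show ?thesis by simp
qed

lemma step_extend:
  fixes f g :: "real \<Rightarrow> 'a::real_normed_vector"
  assumes ax: "a \<le> x" and xx: "x < x'"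
    and g1: "\<forall>y\<in>{a..x}. norm (f y - g y) \<le> \<epsilon>" and g2: "g integrable_on {a..x}"
    and near: "\<forall>y\<in>{x..x'}. norm (f y - f x') \<le> \<epsilon>"
  shows "\<exists>g'. (\<forall>y\<in>{a..x'}. norm (f y - g' y) \<le> \<epsilon>) \<and> g' integrable_on {a..x'}"
proof -
  define g' where "g' y = (if y \<le> x then g y else f x')" for y
  obtain i where i: "(g has_integral i) {a..x}" using g2 by blast
  have i': "(g' has_integral i) {a..x}"
    by (rule has_integral_eq[OF _ i]) (simp add: g'_def)
  have "((\<lambda>y. f x') has_integral (measure lborel {x..x'} *\<^sub>R f x')) {x..x'}" by (rule has_integral_const_real)
  then have j': "(g' has_integral (measure lborel {x..x'} *\<^sub>R f x')) {x..x'}"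
    by (rule has_integral_spike_finite[where S="{x}", rotated 2]) (auto simp: g'_def)
  have "(g' has_integral (i + measure lborel {x..x'} *\<^sub>R f x')) {a..x'}"
    by (rule has_integral_combine_rnv[OF ax _ i' j']) (use xx in simp)
  moreover have "\<forall>y\<in>{a..x'}. norm (f y - g' y) \<le> \<epsilon>"
    using g1 near by (auto simp: g'_def)
  ultimately show ?thesis by blast
qed

lemma cont_integrable:
  fixes f :: "real \<Rightarrow> 'a::{real_normed_vector, complete_space}"
  assumes cf: "continuous_on {a..b} f"
  shows "f integrable_on {a..b}"
proof (cases "a \<le> b")
  case False
  then have "{a..b} = {}" by simp
  then show ?thesis by (simp add: integrable_on_empty)
next
  case True
  note ab = True
  show ?thesis
  proof (rule integrable_ulim)
    fix \<epsilon> :: real assume \<epsilon>: "\<epsilon> > 0"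
    have uc: "uniformly_continuous_on {a..b} f"
      using compact_uniformly_continuous[OF cf compact_Icc] .
    obtain \<delta> where \<delta>: "\<delta> > 0" and d: "\<And>y y'. y \<in> {a..b} \<Longrightarrow> y' \<in> {a..b} \<Longrightarrow> dist y' y < \<delta> \<Longrightarrow> dist (f y') (f y) < \<epsilon>"
      using uc \<epsilon> unfolding uniformly_continuous_on_def by metis
    define x where "x k = min (a + real k * (\<delta>/2)) b" for k
    have P: "\<exists>g. (\<forall>y\<in>{a..x k}. norm (f y - g y) \<le> \<epsilon>) \<and> g integrable_on {a..x k}" for k
    proof (induction k)
      case 0
      have xa: "x 0 = a" using ab by (simp add: x_def)
      have "((\<lambda>y. f a) has_integral (measure lborel {a..a} *\<^sub>R f a)) {a..a}" by (rule has_integral_const_real)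
      then have i: "(\<lambda>y. f a) integrable_on {a..a}" by blast
      have n: "\<forall>y\<in>{a..a}. norm (f y - f a) \<le> \<epsilon>" using \<epsilon> by simp
      show ?case unfolding xa using i n by (intro exI[of _ "\<lambda>y. f a"] conjI)
    next
      case (Suc k)
      then obtain g where g1: "\<forall>y\<in>{a..x k}. norm (f y - g y) \<le> \<epsilon>" and g2: "g integrable_on {a..x k}"
        by blast
      have mono: "x k \<le> x (Suc k)"
        unfolding x_def by (rule min.mono) (use \<delta> in \<open>auto simp: algebra_simps\<close>)
      show ?case
      proof (cases "x k < x (Suc k)")
        case True
        have near: "\<forall>y\<in>{x k..x (Suc k)}. norm (f y - f (x (Suc k))) \<le> \<epsilon>"
        proof
          fix y assume y: "y \<in> {x k..x (Suc k)}"
          have xk: "a \<le> x k" using ab \<delta> by (simp add: x_def)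
          have xs: "x (Suc k) \<le> b" "a \<le> x (Suc k)" using ab \<delta> by (auto simp: x_def)
          have "x (Suc k) - x k \<le> \<delta>/2"
          proof -
            define X where "X = real k * (\<delta>/2)"
            have "a + real (Suc k) * (\<delta>/2) = a + X + \<delta>/2" by (simp add: X_def algebra_simps)
            then have "x (Suc k) = min (a + X + \<delta>/2) b"
              unfolding x_def by (simp only:)
            moreover have "x k = min (a + X) b" by (simp only: x_def X_def)
            ultimately show ?thesis using \<delta> by linarith
          qed
          then have "dist y (x (Suc k)) < \<delta>" using y \<delta> by (simp add: dist_real_def)
          then have "dist (f y) (f (x (Suc k))) < \<epsilon>"
            using d[of "x (Suc k)" y] y xk xs by auto
          then show "norm (f y - f (x (Suc k))) \<le> \<epsilon>" by (simp add: dist_norm)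
        qed
        have xk: "a \<le> x k" using ab \<delta> by (simp add: x_def)
        show ?thesis by (rule step_extend[OF xk True g1 g2 near])
      next
        case False
        then have "x (Suc k) = x k" using mono by simp
        then show ?thesis using g1 g2 by auto
      qed
    qed
    obtain k where k: "(b - a) / (\<delta>/2) < real k" using reals_Archimedean2 by blast
    have "x k = b"
    proof -
      have "b - a < real k * (\<delta>/2)" using k \<delta> by (simp add: field_simps)
      then show ?thesis by (simp add: x_def)
    qed
    then show "\<exists>g. (\<forall>x\<in>{a..b}. norm (f x - g x) \<le> \<epsilon>) \<and> g integrable_on {a..b}"
      using P[of k] by simp
  qed
qed

lemma scal_deriv:
  assumes "(g has_real_derivative g') (at x within S)"
  shows "((\<lambda>y. g y *\<^sub>R v) has_vector_derivative (g' *\<^sub>R v)) (at x within S)"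
  using has_vector_derivative_scaleR[OF assms has_vector_derivative_const[of v]] by simp

lemma deriv_at_cont:
  assumes "\<And>x. (f has_vector_derivative f' x) (at x)"
  shows "continuous_on S f"
  by (rule continuous_at_imp_continuous_on) (use assms has_vector_derivative_continuous in blast)

lemma eta_expand:
  fixes f :: "real \<Rightarrow> 'a::{real_normed_vector, complete_space}"
  assumes ab: "a < b"
    and d1: "\<And>s. s \<in> {a..b} \<Longrightarrow> (f has_vector_derivative f1 s) (at s within {a..b})"
    and d2: "\<And>s. s \<in> {a..b} \<Longrightarrow> (f1 has_vector_derivative f2 s) (at s within {a..b})"
    and d3: "\<And>s. s \<in> {a..b} \<Longrightarrow> (f2 has_vector_derivative f3 s) (at s within {a..b})"
    and K: "\<And>s. s \<in> {a..b} \<Longrightarrow> norm (f3 s) \<le> K"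
  shows "norm ((1/2) *\<^sub>R (f a + f b) - (1/(b-a)) *\<^sub>R integral {a..b} f - ((b-a)^2/12) *\<^sub>R f2 a)
          \<le> 3/2 * K * (b-a)^3"
proof -
  define h where "h = b - a"
  have h: "h > 0" using ab h_def by simp
  define P where "P y = f a + (y-a) *\<^sub>R f1 a + ((y-a)^2/2) *\<^sub>R f2 a" for y
  define Q where "Q y = (y-a) *\<^sub>R f a + ((y-a)^2/2) *\<^sub>R f1 a + ((y-a)^3/6) *\<^sub>R f2 a" for y
  have K0: "0 \<le> K"
  proof -
    have "norm (f3 a) \<le> K" using K ab by simp
    then show ?thesis by (rule order_trans[OF norm_ge_zero])
  qed
  have RB: "norm (f y - P y) \<le> K * h^3" if "y \<in> {a..b}" for y
  proof -
    have "norm (f y - P y) \<le> K * \<bar>y - a\<bar>^3"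
      using taylor3[OF d1 d2 d3 K, of a y] that ab by (simp add: P_def diff_diff_eq)
    also have "\<dots> \<le> K * h^3"
      using that K0 by (auto intro!: mult_left_mono power_mono simp: h_def)
    finally show ?thesis .
  qed
  have dQ: "(Q has_vector_derivative P x) (at x)" for x
  proof -
    have r1: "((\<lambda>y. y - a) has_real_derivative 1) (at x)"
      by (auto intro!: derivative_eq_intros)
    have r2: "((\<lambda>y. (y-a)^2/2) has_real_derivative (x - a)) (at x)"
      by (auto intro!: derivative_eq_intros)
    have r3: "((\<lambda>y. (y-a)^3/6) has_real_derivative ((x - a)^2/2)) (at x)"
      by (auto intro!: derivative_eq_intros)
    have "(Q has_vector_derivative (1 *\<^sub>R f a + (x-a) *\<^sub>R f1 a + ((x-a)^2/2) *\<^sub>R f2 a)) (at x)"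
      unfolding Q_def by (intro has_vector_derivative_add scal_deriv r1 r2 r3)
    then show "(Q has_vector_derivative P x) (at x)"
      by (simp add: P_def)
  qed
  have QP: "(P has_integral (Q b - Q a)) {a..b}"
    by (rule fundamental_theorem_of_calculus_interior) (use ab dQ deriv_at_cont in auto)
  have cf: "continuous_on {a..b} f" by (rule deriv_cont_on[OF d1])
  have fi: "(f has_integral integral {a..b} f) {a..b}"
    using integrable_integral[OF cont_integrable[OF cf]] .
  define E where "E = integral {a..b} f - (Q b - Q a)"
  have Ei: "((\<lambda>y. f y - P y) has_integral E) {a..b}"
    unfolding E_def by (rule has_integral_diff[OF fi QP])
  have En: "norm E \<le> K * h^3 * h"
    using has_integral_bound_real[OF _ _ Ei, of "K*h^3" "{}"] RB K0 h ab by (simp add: h_def)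
  have Qa: "Q a = 0" by (simp add: Q_def)
  have Pb: "P b = f a + h *\<^sub>R f1 a + (h^2/2) *\<^sub>R f2 a" by (simp add: P_def h_def)
  have Qb: "Q b = h *\<^sub>R f a + (h^2/2) *\<^sub>R f1 a + (h^3/6) *\<^sub>R f2 a" by (simp add: Q_def h_def)
  have I: "integral {a..b} f = E + Q b" using E_def Qa by simp
  have k1: "(1/h) *\<^sub>R (E + Q b) = (1/h) *\<^sub>R E + f a + (h/2) *\<^sub>R f1 a + (h^2/6) *\<^sub>R f2 a"
    unfolding Qb using h by (simp add: scaleR_add_right power2_eq_square power3_eq_cube)
  have k2: "(1/2) *\<^sub>R (f a + f b) = (1/2) *\<^sub>R (f b - P b) + f a + (h/2) *\<^sub>R f1 a + (h^2/4) *\<^sub>R f2 a"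
  proof -
    have half: "(1/2) *\<^sub>R v + (1/2) *\<^sub>R v = v" for v :: 'a
      by (simp flip: scaleR_add_left)
    show ?thesis unfolding Pb by (simp add: algebra_simps half)
  qed
  have k3: "(h^2/4) *\<^sub>R f2 a - (h^2/6) *\<^sub>R f2 a - (h^2/12) *\<^sub>R f2 a = 0"
    by (simp flip: scaleR_diff_left)
  have key: "(1/2) *\<^sub>R (f a + f b) - (1/(b-a)) *\<^sub>R integral {a..b} f - ((b-a)^2/12) *\<^sub>R f2 a
      = (1/2) *\<^sub>R (f b - P b) - (1/h) *\<^sub>R E"
    unfolding I k1 k2 h_def[symmetric] using k3 by (simp add: algebra_simps)
  have "norm ((1/2) *\<^sub>R (f b - P b) - (1/h) *\<^sub>R E) \<le> (1/2) * (K * h^3) + (1/h) * (K*h^3*h)"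
    apply (rule order_trans[OF norm_triangle_ineq4])
    apply (rule add_mono)
    using RB[of b] ab En h by (auto intro!: mult_left_mono simp: pos_divide_le_eq)
  also have "\<dots> = 3/2 * K * h^3" using h by (simp add: field_simps)
  finally show ?thesis using key h_def by simp
qed

lemma near0:
  fixes u :: "real \<Rightarrow> 'a::real_inner"
  assumes sig: "\<sigma> > 0" and x: "0 < x" "x \<le> T" and cont: "continuous_on {0..T} u"
    and d1: "\<And>s. s \<in> {0<..T} \<Longrightarrow> (u has_vector_derivative u1 s) (at s within {0..T})"
    and B: "\<And>s. s \<in> {0<..T} \<Longrightarrow> norm (u1 s) \<le> M * s powr (\<sigma> - 1)"
  shows "norm (u x - u 0) \<le> M / \<sigma> * x powr \<sigma>"
proof -
  define h where "h y = u (y powr (1/\<sigma>))" for y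
  define X where "X = x powr \<sigma>"
  have X0: "0 < X" using x by (simp add: X_def)
  have hX: "h X = u x" using x sig by (simp add: h_def X_def powr_powr)
  have h0: "h 0 = u 0" by (simp add: h_def)
  have ran: "y powr (1/\<sigma>) \<in> {0..T}" if "y \<in> {0..X}" for y
  proof -
    have "y powr (1/\<sigma>) \<le> X powr (1/\<sigma>)" using that sig by (auto intro: powr_mono2)
    also have "\<dots> = x" using x sig by (simp add: X_def powr_powr)
    finally show ?thesis using x by auto
  qed
  have ch: "continuous_on {0..X} h"
    unfolding h_def
    apply (rule continuous_on_compose2[OF cont])
     apply (rule continuous_on_powr') using sig by (auto intro!: continuous_intros ran)
  define D where "D y = ((1/\<sigma>) * y powr (1/\<sigma> - 1)) *\<^sub>R u1 (y powr (1/\<sigma>))" for y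
  have "\<exists>y\<in>{0<..<X}. norm (h X - h 0) \<le> norm ((\<lambda>t. t *\<^sub>R D y) (X - 0))"
  proof (rule mvt_general[OF X0 ch, where f' = "\<lambda>y t. t *\<^sub>R D y"])
    fix y assume y: "0 < y" "y < X"
    let ?z = "y powr (1/\<sigma>)"
    have z: "0 < ?z" "?z < x"
    proof -
      show "0 < ?z" using y by simp
      have "?z < X powr (1/\<sigma>)" using y sig by (auto intro: powr_less_mono2)
      also have "\<dots> = x" using x sig by (simp add: X_def powr_powr)
      finally show "?z < x" .
    qed
    have du: "(u has_vector_derivative u1 ?z) (at ?z)"
    proof -
      have "(u has_vector_derivative u1 ?z) (at ?z within {0..T})" using d1 z x by auto
      moreover have "at ?z within {0..T} = at ?z"
        by (rule at_within_interior) (use z x in auto)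
      ultimately show ?thesis by simp
    qed
    have dp: "((\<lambda>t. t powr (1/\<sigma>)) has_vector_derivative ((1/\<sigma>) * y powr (1/\<sigma> - 1))) (at y)"
      using has_real_derivative_powr[of y "1/\<sigma>"] y
      unfolding has_real_derivative_iff_has_vector_derivative by blast
    have "(h has_vector_derivative ((1/\<sigma>) * y powr (1/\<sigma> - 1)) *\<^sub>R u1 ?z) (at y)"
      using vector_diff_chain_at[OF dp du] by (simp add: h_def[abs_def] o_def)
    then show "(h has_derivative (\<lambda>t. t *\<^sub>R D y)) (at y)"
      by (simp add: has_vector_derivative_def D_def)
  qed
  then obtain y where y: "y \<in> {0<..<X}" and yb: "norm (h X - h 0) \<le> norm ((X - 0) *\<^sub>R D y)"
    by auto
  let ?z = "y powr (1/\<sigma>)"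
  have y0: "0 < y" "y < X" using y by auto
  have z: "0 < ?z" "?z \<le> T" using ran[of y] y0 by auto
  have "norm (u x - u 0) \<le> X * ((1/\<sigma>) * y powr (1/\<sigma> - 1) * norm (u1 ?z))"
    using yb hX h0 X0 y0 sig by (simp add: abs_mult D_def)
  also have "\<dots> \<le> X * ((1/\<sigma>) * y powr (1/\<sigma> - 1) * (M * ?z powr (\<sigma> - 1)))"
    by (intro mult_left_mono) (use B[of ?z] z X0 sig in auto)
  also have "y powr (1/\<sigma> - 1) * ?z powr (\<sigma> - 1) = 1"
  proof -
    have "y powr (1/\<sigma> - 1) * ?z powr (\<sigma> - 1) = y powr ((1/\<sigma> - 1) + (1/\<sigma>) * (\<sigma> - 1))"
      using y0 by (simp add: powr_powr powr_add)
    also have "(1/\<sigma> - 1) + (1/\<sigma>) * (\<sigma> - 1) = 0" using sig by (simp add: field_simps)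
    finally show ?thesis using y0 by simp
  qed
  then have "X * ((1/\<sigma>) * y powr (1/\<sigma> - 1) * (M * ?z powr (\<sigma> - 1))) = M / \<sigma> * X"
    by (simp add: field_simps)
  finally show ?thesis by (simp add: X_def)
qed

lemma powr_cmp1:
  fixes y s x D q :: real
  assumes "0 < y" "y \<le> s" "s \<le> x" "x \<le> D * y"
  shows "s powr q \<le> D powr \<bar>q\<bar> * x powr q"
proof -
  have D1: "1 \<le> D"
  proof -
    have "1 * y \<le> D * y" using assms by linarith
    then show ?thesis using mult_le_cancel_right_pos[of y 1 D] assms by simp
  qed
  show ?thesis
  proof (cases "q \<ge> 0")
    case True
    have "s powr q \<le> x powr q" using assms True by (auto intro: powr_mono2)
    also have "\<dots> \<le> D powr \<bar>q\<bar> * x powr q"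
    proof -
      have "1 \<le> D powr \<bar>q\<bar>" by (rule ge_one_powr_ge_zero[OF D1]) simp
      from mult_right_mono[OF this, of "x powr q"] show ?thesis by simp
    qed
    finally show ?thesis .
  next
    case False
    have "s powr q \<le> y powr q" using assms False by (intro powr_mono2') auto
    also have "\<dots> \<le> (x / D) powr q"
      using assms False D1 by (intro powr_mono2') (auto simp: field_simps)
    also have "\<dots> = x powr q / D powr q" by (rule powr_divide)
    also have "\<dots> = D powr \<bar>q\<bar> * x powr q"
    proof -
      have "D powr \<bar>q\<bar> = inverse (D powr q)" using False powr_minus[of D q] by simp
      then show ?thesis by (simp add: divide_inverse mult.commute)
    qed
    finally show ?thesis .
  qed
qed

lemma powr_cmp2:
  fixes s x D q :: real
  assumes "0 < s" "s \<le> x" "x \<le> D * s"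
  shows "x powr q \<le> D powr \<bar>q\<bar> * s powr q"
proof -
  have D1: "1 \<le> D"
  proof -
    have "1 * s \<le> D * s" using assms by linarith
    then show ?thesis using mult_le_cancel_right_pos[of s 1 D] assms by simp
  qed
  show ?thesis
  proof (cases "q \<ge> 0")
    case True
    have "x powr q \<le> (D * s) powr q" using assms True by (auto intro: powr_mono2)
    also have "\<dots> = D powr \<bar>q\<bar> * s powr q" using True D1 assms by (simp add: powr_mult)
    finally show ?thesis .
  next
    case False
    have "x powr q \<le> s powr q" using assms False by (intro powr_mono2') auto
    also have "\<dots> \<le> D powr \<bar>q\<bar> * s powr q"
    proof -
      have "1 \<le> D powr \<bar>q\<bar>" by (rule ge_one_powr_ge_zero[OF D1]) simp
      from mult_right_mono[OF this, of "s powr q"] show ?thesis by simp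
    qed
    finally show ?thesis .
  qed
qed

lemma tau_bound:
  fixes \<gamma> :: real and j :: nat
  assumes g: "\<gamma> \<ge> 1" and j: "j \<ge> 1"
  shows "real j powr \<gamma> - real (j-1) powr \<gamma> \<le> \<gamma> * real j powr (\<gamma> - 1)"
proof (cases "j = 1")
  case True then show ?thesis using g by simp
next
  case False
  then have j2: "j \<ge> 2" using j by simp
  have "\<exists>z. real (j-1) < z \<and> z < real j \<and>
      real j powr \<gamma> - real (j-1) powr \<gamma> = (real j - real (j-1)) * (\<gamma> * z powr (\<gamma> - 1))"
    apply (rule MVT2)
    using j2 apply simp
    apply (rule has_real_derivative_powr)
    using j2 by auto
  then obtain z where z: "real (j-1) < z" "z < real j"
    and eq: "real j powr \<gamma> - real (j-1) powr \<gamma> = (real j - real (j-1)) * (\<gamma> * z powr (\<gamma> - 1))"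
    by blast
  have "z powr (\<gamma> - 1) \<le> real j powr (\<gamma> - 1)" using z g j2 by (intro powr_mono2) auto
  then show ?thesis using eq j2 g by (simp add: of_nat_diff)
qed

lemma second_diff:
  fixes \<gamma> :: real and j :: nat
  assumes g: "\<gamma> \<ge> 1" and j: "j \<ge> 3"
  shows "\<bar>(real j powr \<gamma> - real (j-1) powr \<gamma>) - (real (j-1) powr \<gamma> - real (j-2) powr \<gamma>)\<bar>
         \<le> 2 * (\<gamma> * (\<gamma> - 1) * (3 powr \<bar>\<gamma> - 2\<bar> * real j powr (\<gamma> - 2)))"
proof -
  define lo where "lo = real j - 2"
  define hi where "hi = real j"
  have lo1: "1 \<le> lo" using j by (simp add: lo_def)
  define K where "K = \<gamma> * (\<gamma> - 1) * (3 powr \<bar>\<gamma> - 2\<bar> * real j powr (\<gamma> - 2))"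
  let ?f = "\<lambda>x::real. x powr \<gamma>"
  let ?f1 = "\<lambda>x::real. \<gamma> * x powr (\<gamma> - 1)"
  let ?f2 = "\<lambda>x::real. \<gamma> * ((\<gamma> - 1) * x powr (\<gamma> - 1 - 1))"
  have d1: "(?f has_vector_derivative ?f1 s) (at s within {lo..hi})" if "s \<in> {lo..hi}" for s
  proof -
    have "s > 0" using that lo1 by auto
    from has_real_derivative_powr[OF this, of \<gamma>]
    show ?thesis unfolding has_real_derivative_iff_has_vector_derivative[symmetric]
      by (rule has_field_derivative_at_within)
  qed
  have d2: "(?f1 has_vector_derivative ?f2 s) (at s within {lo..hi})" if "s \<in> {lo..hi}" for s
  proof -
    have "s > 0" using that lo1 by auto
    from DERIV_cmult[OF has_real_derivative_powr[OF this, of "\<gamma> - 1"], of \<gamma>]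
    show ?thesis unfolding has_real_derivative_iff_has_vector_derivative[symmetric]
      by (rule has_field_derivative_at_within)
  qed
  have K: "norm (?f2 s) \<le> K" if "s \<in> {lo..hi}" for s
  proof -
    have s: "1 \<le> s" "s \<le> real j" using that lo1 by (auto simp: hi_def)
    have "s powr (\<gamma> - 2) \<le> 3 powr \<bar>\<gamma> - 2\<bar> * real j powr (\<gamma> - 2)"
      using that lo1 j by (intro powr_cmp1[of lo]) (auto simp: lo_def hi_def)
    then have "\<gamma> * ((\<gamma> - 1) * s powr (\<gamma> - 2)) \<le> K"
      unfolding K_def using g by (auto intro!: mult_left_mono simp: mult.assoc)
    moreover have "0 \<le> \<gamma> * ((\<gamma> - 1) * s powr (\<gamma> - 2))" using g by auto
    ultimately show ?thesis by (simp add: diff_diff_eq)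
  qed
  have a: "real j - 1 \<in> {lo..hi}" and x1: "real j \<in> {lo..hi}" and x2: "real j - 2 \<in> {lo..hi}"
    by (auto simp: lo_def hi_def)
  have t1: "norm (?f (real j) - ?f (real j - 1) - (real j - (real j - 1)) *\<^sub>R ?f1 (real j - 1)) \<le> K * (real j - (real j - 1))^2"
    by (rule taylor2[OF d1 d2 K a x1])
  have t2: "norm (?f (real j - 2) - ?f (real j - 1) - (real j - 2 - (real j - 1)) *\<^sub>R ?f1 (real j - 1)) \<le> K * (real j - 2 - (real j - 1))^2"
    by (rule taylor2[OF d1 d2 K a x2])
  have e1: "real (j-1) = real j - 1" "real (j-2) = real j - 2" using j by (auto simp: of_nat_diff)
  show ?thesis using t1 t2 unfolding e1 K_def[symmetric] by (simp add: abs_real_def split: if_splits)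
qed

definition Phi :: "real \<Rightarrow> nat \<Rightarrow> real" where
  "Phi q n = (if q = 0 then 1 + ln (real n) else if q < 0 then 1 else real n powr q)"

lemma Phi_ge1: "n \<ge> 1 \<Longrightarrow> 1 \<le> Phi q n"
  by (auto simp: Phi_def intro: ge_one_powr_ge_zero)

lemma Phi_mono: "1 \<le> m \<Longrightarrow> m \<le> n \<Longrightarrow> Phi q m \<le> Phi q n"
  by (auto simp: Phi_def intro: powr_mono2)

lemma Phi_pow: "n \<ge> 1 \<Longrightarrow> real n powr q \<le> Phi q n"
  using powr_mono2'[of q 1 "real n"] by (auto simp: Phi_def)

lemma sum_pow_bound:
  fixes q :: real
  shows "\<exists>CS\<ge>0. \<forall>n\<ge>1. (\<Sum>j=1..n. real j powr (q - 1)) \<le> CS * Phi q n"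
proof -
  define D where "D = 2 powr \<bar>q - 1\<bar>"
  have D1: "1 \<le> D" unfolding D_def by (rule ge_one_powr_ge_zero) auto
  define F where "F x = (if q = 0 then ln x else x powr q / q)" for x :: real
  have dF: "DERIV F x :> x powr (q - 1)" if "x > 0" for x
  proof (cases "q = 0")
    case True
    have "DERIV ln x :> inverse x" using that by (rule DERIV_ln)
    moreover have "inverse x = x powr (q - 1)" using True that by (simp add: powr_minus)
    ultimately show ?thesis using True by (simp add: F_def[abs_def])
  next
    case False
    have "DERIV (\<lambda>x. x powr q / q) x :> q * x powr (q - 1) / q"
      using has_real_derivative_powr[OF that, of q] by (rule DERIV_cdivide)
    then show ?thesis using False by (simp add: F_def[abs_def])
  qed
  have stepb: "real (Suc n) powr (q - 1) \<le> D * (F (real (Suc n)) - F (real n))" if n: "n \<ge> 1" for n :: nat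
  proof -
    have "\<exists>z. real n < z \<and> z < real (Suc n) \<and> F (real (Suc n)) - F (real n) = (real (Suc n) - real n) * z powr (q - 1)"
      apply (rule MVT2) using n by (auto intro!: dF)
    then obtain z where z: "real n < z" "z < real (Suc n)" and eq: "F (real (Suc n)) - F (real n) = z powr (q - 1)"
      by auto
    have "real (Suc n) powr (q - 1) \<le> D * z powr (q - 1)"
      unfolding D_def using z n by (intro powr_cmp2) auto
    then show ?thesis using eq by simp
  qed
  have main: "(\<Sum>j=1..n. real j powr (q - 1)) \<le> 1 + D * (F (real n) - F 1)" if "n \<ge> 1" for n :: nat
    using that
  proof (induction n rule: dec_induct)
    case base then show ?case by simp
  next
    case (step m)
    have "(\<Sum>j=1..Suc m. real j powr (q - 1)) = (\<Sum>j=1..m. real j powr (q - 1)) + real (Suc m) powr (q - 1)"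
      by simp
    also have "\<dots> \<le> 1 + D * (F (real m) - F 1) + D * (F (real (Suc m)) - F (real m))"
      using step.IH \<open>1 \<le> m\<close> stepb[of m] by linarith
    finally show ?case by (simp add: algebra_simps)
  qed
  show ?thesis
  proof (cases "q = 0")
    case True
    show ?thesis
    proof (intro exI[of _ "1 + D"] conjI allI impI)
      fix n :: nat assume n: "1 \<le> n"
      have "(\<Sum>j=1..n. real j powr (q - 1)) \<le> 1 + D * ln (real n)"
        using main[OF n] True by (simp add: F_def)
      also have "\<dots> \<le> (1 + D) * (1 + ln (real n))"
        using D1 n by (simp add: algebra_simps)
      finally show "(\<Sum>j=1..n. real j powr (q - 1)) \<le> (1 + D) * Phi q n" using True by (simp add: Phi_def)
    qed (use D1 in simp)
  next
    case False
    note qne = False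
    show ?thesis
    proof (cases "q < 0")
      case True
      show ?thesis
      proof (intro exI[of _ "1 + D / (- q)"] conjI allI impI)
        fix n :: nat assume n: "1 \<le> n"
        have "real n powr q \<le> 1" using powr_mono2'[of q 1 "real n"] True n by auto
        moreover have "0 \<le> real n powr q" by simp
        ultimately have "(real n powr q / q - 1 / q) \<le> 1 / (- q)" using True
          by (simp add: divide_simps)
        then have "D * (F (real n) - F 1) \<le> D * (1 / (- q))" using qne D1
          by (intro mult_left_mono) (auto simp: F_def)
        then show "(\<Sum>j=1..n. real j powr (q - 1)) \<le> (1 + D / (- q)) * Phi q n"
          using main[OF n] True by (simp add: Phi_def)
      qed (use D1 True in simp)
    next
      case False
      then have qp: "q > 0" using qne by simp
      show ?thesis
      proof (intro exI[of _ "1 + D / q"] conjI allI impI)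
        fix n :: nat assume n: "1 \<le> n"
        have n1: "1 \<le> real n powr q" using n qp by (intro ge_one_powr_ge_zero) auto
        have "D * (F (real n) - F 1) \<le> D * (real n powr q / q)" using qne D1 qp
          by (intro mult_left_mono) (auto simp: F_def)
        then have "(\<Sum>j=1..n. real j powr (q - 1)) \<le> 1 + D / q * real n powr q"
          using main[OF n] by simp
        also have "\<dots> \<le> (1 + D / q) * real n powr q" using n1 by (simp add: algebra_simps)
        finally show "(\<Sum>j=1..n. real j powr (q - 1)) \<le> (1 + D / q) * Phi q n"
          using qp by (simp add: Phi_def)
      qed (use D1 qp in simp)
    qed
  qed
qed

lemma lin_integral:
  fixes A B :: "'a::real_normed_vector"
  assumes ab: "a < b"
  shows "((\<lambda>s. ((b - s)/(b - a)) *\<^sub>R A + ((s - a)/(b - a)) *\<^sub>R B) has_integral ((b - a)/2) *\<^sub>R (A + B)) {a..b}"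
proof -
  define d where "d = b - a"
  have d: "d > 0" using ab by (simp add: d_def)
  define F where "F = (\<lambda>s. (- ((b - s)^2 / (2 * d))) *\<^sub>R A + ((s - a)^2 / (2 * d)) *\<^sub>R B)"
  have dF: "(F has_vector_derivative ((b - x)/d) *\<^sub>R A + ((x - a)/d) *\<^sub>R B) (at x)" for x
  proof -
    have r1: "((\<lambda>s. - ((b - s)^2 / (2 * d))) has_real_derivative ((b - x)/d)) (at x)"
      using d by (auto intro!: derivative_eq_intros simp: field_simps)
    have r2: "((\<lambda>s. (s - a)^2 / (2 * d)) has_real_derivative ((x - a)/d)) (at x)"
      using d by (auto intro!: derivative_eq_intros simp: field_simps)
    show ?thesis
      unfolding F_def by (intro has_vector_derivative_add scal_deriv r1 r2)
  qed
  have "((\<lambda>s. ((b - s)/d) *\<^sub>R A + ((s - a)/d) *\<^sub>R B) has_integral (F b - F a)) {a..b}"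
    by (rule fundamental_theorem_of_calculus_interior) (use ab dF deriv_at_cont[OF dF] in auto)
  moreover have "F b - F a = ((b - a)/2) *\<^sub>R (A + B)"
    using d by (simp add: F_def power2_eq_square scaleR_add_right d_def[symmetric])
  ultimately show ?thesis by (simp add: d_def)
qed

lemma avg_dev:
  fixes f :: "real \<Rightarrow> 'a::{real_normed_vector, complete_space}"
  assumes ab: "a < b" and cf: "continuous_on {a..b} f"
    and B: "\<And>x. x \<in> {a..b} \<Longrightarrow> norm (v - f x) \<le> B"
  shows "norm (v - (1/(b-a)) *\<^sub>R integral {a..b} f) \<le> B"
proof -
  have B0: "0 \<le> B" using B[of a] ab by (meson atLeastAtMost_iff less_imp_le norm_ge_zero order_refl order_trans)
  have fi: "(f has_integral integral {a..b} f) {a..b}"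
    using integrable_integral[OF cont_integrable[OF cf]] .
  have "((\<lambda>x. v - f x) has_integral ((b - a) *\<^sub>R v - integral {a..b} f)) {a..b}"
    using has_integral_diff[OF has_integral_const_real[of v a b] fi] ab by simp
  from has_integral_bound_real[OF B0 _ this, of "{}"] B ab
  have n: "norm ((b - a) *\<^sub>R v - integral {a..b} f) \<le> B * (b - a)" by simp
  have "v - (1/(b-a)) *\<^sub>R integral {a..b} f = (1/(b-a)) *\<^sub>R ((b - a) *\<^sub>R v - integral {a..b} f)"
    using ab by (simp add: scaleR_diff_right)
  then have "norm (v - (1/(b-a)) *\<^sub>R integral {a..b} f) = norm ((b - a) *\<^sub>R v - integral {a..b} f) / (b - a)"
    using ab by simp
  also have "\<dots> \<le> B" using n ab by (simp add: divide_simps)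
  finally show ?thesis .
qed

lemma cvx_norm:
  fixes x y :: "'a::real_normed_vector"
  assumes "0 \<le> l" "l \<le> 1"
  shows "norm (l *\<^sub>R x + (1 - l) *\<^sub>R y) \<le> max (norm x) (norm y)"
proof -
  have "norm (l *\<^sub>R x + (1 - l) *\<^sub>R y) \<le> l * norm x + (1 - l) * norm y"
    by (rule order_trans[OF norm_triangle_ineq]) (simp add: assms)
  also have "\<dots> \<le> l * max (norm x) (norm y) + (1 - l) * max (norm x) (norm y)"
    using assms by (intro add_mono mult_left_mono) auto
  finally show ?thesis by (simp add: algebra_simps)
qed

lemma rec_bound:
  fixes e w r :: "nat \<Rightarrow> 'a::real_normed_vector"
  assumes e0: "e 0 = 0" and w0: "w 0 = 0"
    and rec: "\<And>j. 1 \<le> j \<Longrightarrow> j \<le> n \<Longrightarrow> e j + e (j-1) = 2 *\<^sub>R (w j + r j)"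
    and bd: "\<And>j. 1 \<le> j \<Longrightarrow> j \<le> n \<Longrightarrow> norm (w j - w (j-1)) + 2 * norm (r j) \<le> \<beta> j"
  shows "norm (e n - w n) \<le> (\<Sum>j=1..n. \<beta> j)"
  using rec bd
proof (induction n)
  case 0 then show ?case using e0 w0 by simp
next
  case (Suc m)
  have IH: "norm (e m - w m) \<le> (\<Sum>j=1..m. \<beta> j)" using Suc by auto
  have r: "e (Suc m) + e m = 2 *\<^sub>R (w (Suc m) + r (Suc m))" using Suc.prems(1)[of "Suc m"] by simp
  have eqn: "e (Suc m) - w (Suc m) = - (e m - w m) + (w (Suc m) - w m) + 2 *\<^sub>R r (Suc m)"
  proof -
    have "e (Suc m) = 2 *\<^sub>R (w (Suc m) + r (Suc m)) - e m" using r by (simp add: algebra_simps)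
    then show ?thesis by (simp add: algebra_simps scaleR_2)
  qed
  have "norm (e (Suc m) - w (Suc m)) \<le> norm (e m - w m) + norm (w (Suc m) - w m) + 2 * norm (r (Suc m))"
  proof -
    have "norm (- (e m - w m) + (w (Suc m) - w m) + 2 *\<^sub>R r (Suc m))
        \<le> norm (- (e m - w m) + (w (Suc m) - w m)) + norm (2 *\<^sub>R r (Suc m))"
      by (rule norm_triangle_ineq)
    also have "\<dots> \<le> (norm (e m - w m) + norm (w (Suc m) - w m)) + 2 * norm (r (Suc m))"
      using norm_triangle_ineq[of "- (e m - w m)" "w (Suc m) - w m"] by (simp add: norm_minus_commute)
    finally show ?thesis by (simp only: eqn)
  qed
  also have "\<dots> \<le> (\<Sum>j=1..m. \<beta> j) + \<beta> (Suc m)"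
    using IH Suc.prems(2)[of "Suc m"] by simp
  finally show ?case by simp
qed

lemma endpoint_le:
  fixes g :: "real \<Rightarrow> real"
  assumes ab: "a < b" and cg: "continuous_on {a..b} g" and S: "\<And>s. s \<in> {a<..<b} \<Longrightarrow> g s \<le> S"
  shows "g b \<le> S"
proof -
  have cl: "closed {x \<in> {a..b}. g x \<le> (\<lambda>_. S) x}"
    by (rule continuous_on_closed_Collect_le[OF cg continuous_on_const]) simp
  have "{a<..<b} \<subseteq> {x \<in> {a..b}. g x \<le> (\<lambda>_. S) x}" using S by auto
  from closure_minimal[OF this cl] ab have "{a..b} \<subseteq> {x \<in> {a..b}. g x \<le> S}" by simp
  from subsetD[OF this, of b] ab show ?thesis by simp
qed

lemma pw2: "0 < t \<Longrightarrow> t^2 * t powr (\<sigma> - 2) = t powr (\<sigma>::real)"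
  by (simp add: powr_diff)
lemma pw3: "0 < t \<Longrightarrow> t^3 * t powr (\<sigma> - 3) = t powr (\<sigma>::real)"
  by (simp add: powr_diff)
lemma pw1: "0 < t \<Longrightarrow> t * t powr (\<sigma> - 1) = t powr (\<sigma>::real)"
  by (simp add: powr_diff)

locale setting =
  fixes u u1 u2 u3 :: "real \<Rightarrow> 'a::{real_inner, complete_space}"
    and T \<sigma> \<gamma> M :: real
  assumes T: "T > 0" and sigma: "\<sigma> > 0" and gamma: "\<gamma> \<ge> 1"
    and cont: "continuous_on {0..T} u"
    and d1: "\<And>s. s \<in> {0<..T} \<Longrightarrow> (u has_vector_derivative u1 s) (at s within {0..T})"
    and d2: "\<And>s. s \<in> {0<..T} \<Longrightarrow> (u1 has_vector_derivative u2 s) (at s within {0..T})"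
    and d3: "\<And>s. s \<in> {0<..T} \<Longrightarrow> (u2 has_vector_derivative u3 s) (at s within {0..T})"
    and reg: "\<And>s. s \<in> {0<..T} \<Longrightarrow>
               s * norm (u1 s) + s\<^sup>2 * norm (u2 s) + s ^ 3 * norm (u3 s) \<le> M * s powr \<sigma>"
begin

lemma M0: "M \<ge> 0"
proof -
  have "0 \<le> T * norm (u1 T) + T\<^sup>2 * norm (u2 T) + T ^ 3 * norm (u3 T)" using T by auto
  also have "\<dots> \<le> M * T powr \<sigma>" using reg[of T] T by auto
  finally show ?thesis using T by (simp add: zero_le_mult_iff)
qed

lemma b1: "s \<in> {0<..T} \<Longrightarrow> norm (u1 s) \<le> M * s powr (\<sigma> - 1)"
proof -
  assume s: "s \<in> {0<..T}"
  then have "s * norm (u1 s) \<le> M * s powr \<sigma>" using reg[OF s]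
    by (smt (verit) greaterThanAtMost_iff mult_nonneg_nonneg norm_ge_zero zero_le_power)
  also have "\<dots> = s * (M * s powr (\<sigma> - 1))" using s pw1[of s \<sigma>] by (simp add: algebra_simps)
  finally show ?thesis using s by (simp add: mult_le_cancel_left_pos)
qed

lemma b2: "s \<in> {0<..T} \<Longrightarrow> norm (u2 s) \<le> M * s powr (\<sigma> - 2)"
proof -
  assume s: "s \<in> {0<..T}"
  then have "s^2 * norm (u2 s) \<le> M * s powr \<sigma>" using reg[OF s]
    by (smt (verit) greaterThanAtMost_iff mult_nonneg_nonneg norm_ge_zero zero_le_power)
  also have "\<dots> = s^2 * (M * s powr (\<sigma> - 2))" using s pw2[of s \<sigma>] by (simp add: algebra_simps)
  finally show ?thesis using s by (simp add: mult_le_cancel_left_pos)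
qed

lemma b3: "s \<in> {0<..T} \<Longrightarrow> norm (u3 s) \<le> M * s powr (\<sigma> - 3)"
proof -
  assume s: "s \<in> {0<..T}"
  then have "s^3 * norm (u3 s) \<le> M * s powr \<sigma>" using reg[OF s]
    by (smt (verit) greaterThanAtMost_iff mult_nonneg_nonneg norm_ge_zero zero_le_power)
  also have "\<dots> = s^3 * (M * s powr (\<sigma> - 3))" using s pw3[of s \<sigma>] by (simp add: algebra_simps)
  finally show ?thesis using s by (simp add: mult_le_cancel_left_pos)
qed

lemma dsub:
  assumes "0 < lo" "hi \<le> T"
  shows "\<And>s. s \<in> {lo..hi} \<Longrightarrow> (u has_vector_derivative u1 s) (at s within {lo..hi})"
    and "\<And>s. s \<in> {lo..hi} \<Longrightarrow> (u1 has_vector_derivative u2 s) (at s within {lo..hi})"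
    and "\<And>s. s \<in> {lo..hi} \<Longrightarrow> (u2 has_vector_derivative u3 s) (at s within {lo..hi})"
proof -
  have sub: "{lo..hi} \<subseteq> {0..T}" using assms by auto
  fix s assume s: "s \<in> {lo..hi}"
  then have s': "s \<in> {0<..T}" using assms by auto
  show "(u has_vector_derivative u1 s) (at s within {lo..hi})"
    by (rule has_vector_derivative_within_subset[OF d1[OF s'] sub])
  show "(u1 has_vector_derivative u2 s) (at s within {lo..hi})"
    by (rule has_vector_derivative_within_subset[OF d2[OF s'] sub])
  show "(u2 has_vector_derivative u3 s) (at s within {lo..hi})"
    by (rule has_vector_derivative_within_subset[OF d3[OF s'] sub])
qed

lemma osc0:
  assumes x: "x \<in> {0..X}" and y: "y \<in> {0..X}" and X: "X \<le> T"
  shows "norm (u x - u y) \<le> 2 * M / \<sigma> * X powr \<sigma>"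
proof -
  have one: "norm (u z - u 0) \<le> M / \<sigma> * X powr \<sigma>" if z: "z \<in> {0..X}" for z
  proof (cases "z = 0")
    case True then show ?thesis using M0 sigma by simp
  next
    case False
    then have z0: "0 < z" using z by simp
    have "norm (u z - u 0) \<le> M / \<sigma> * z powr \<sigma>"
      by (rule near0[OF sigma z0 _ cont d1 b1]) (use z X in auto)
    also have "\<dots> \<le> M / \<sigma> * X powr \<sigma>"
      using M0 sigma z by (intro mult_left_mono powr_mono2) auto
    finally show ?thesis .
  qed
  have "norm (u x - u y) \<le> norm (u x - u 0) + norm (u y - u 0)"
    using norm_triangle_ineq4[of "u x - u 0" "u y - u 0"] by simp
  also have "\<dots> \<le> 2 * M / \<sigma> * X powr \<sigma>" using one[OF x] one[OF y] by simp
  finally show ?thesis .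
qed

end

lemma tstep_pos: "T > 0 \<Longrightarrow> N \<ge> 1 \<Longrightarrow> tstep T \<gamma> N > 0"
  by (simp add: tstep_def)

lemma mesh_eq: "T > 0 \<Longrightarrow> mesh T \<gamma> N j = real j powr \<gamma> * tstep T \<gamma> N powr \<gamma>"
  unfolding mesh_def by (rule powr_mult)

lemma mesh_0: "mesh T \<gamma> N 0 = 0"
  by (simp add: mesh_def)

lemma mesh_N: "T > 0 \<Longrightarrow> \<gamma> > 0 \<Longrightarrow> N \<ge> 1 \<Longrightarrow> mesh T \<gamma> N N = T"
  by (simp add: mesh_def tstep_def powr_powr)

lemma mesh_less: "T > 0 \<Longrightarrow> \<gamma> > 0 \<Longrightarrow> N \<ge> 1 \<Longrightarrow> j < k \<Longrightarrow> mesh T \<gamma> N j < mesh T \<gamma> N k"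
  unfolding mesh_def
  by (rule powr_less_mono2) (use tstep_pos[of T N \<gamma>] in \<open>auto intro!: mult_strict_right_mono\<close>)

lemma mesh_le: "T > 0 \<Longrightarrow> \<gamma> > 0 \<Longrightarrow> N \<ge> 1 \<Longrightarrow> j \<le> k \<Longrightarrow> mesh T \<gamma> N j \<le> mesh T \<gamma> N k"
  using mesh_less[of T \<gamma> N j k] by (cases "j = k") auto

lemma mesh_pos: "T > 0 \<Longrightarrow> \<gamma> > 0 \<Longrightarrow> N \<ge> 1 \<Longrightarrow> j \<ge> 1 \<Longrightarrow> mesh T \<gamma> N j > 0"
  using mesh_less[of T \<gamma> N 0 j] by (simp add: mesh_0)

lemma split_aux:
  fixes x a b a' b' :: "'a::real_vector"
  shows "x - (l *\<^sub>R a' + m *\<^sub>R b') = (x - (l *\<^sub>R a + m *\<^sub>R b)) + (l *\<^sub>R (a - a') + m *\<^sub>R (b - b'))"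
  by (simp add: scaleR_diff_right)

lemma rec_aux:
  fixes a b a' b' :: "'a::real_vector"
  shows "(b - b') + (a - a') = 2 *\<^sub>R ((1/2) *\<^sub>R (a + b) - (1/2) *\<^sub>R (a' + b'))"
  by (simp add: scaleR_diff_right)

locale mesh_setting = setting u u1 u2 u3 T \<sigma> \<gamma> M
  for u u1 u2 u3 :: "real \<Rightarrow> 'a::{real_inner, complete_space}" and T \<sigma> \<gamma> M +
  fixes N :: nat and uh :: "real \<Rightarrow> 'a"
  assumes N1: "N \<ge> 1" and interp: "is_avg_interp u (mesh T \<gamma> N) N uh"
begin

abbreviation "tau \<equiv> tstep T \<gamma> N"
abbreviation "t \<equiv> mesh T \<gamma> N"

definition "e j = u (t j) - uh (t j)"
definition "eta j = (1/2) *\<^sub>R (u (t (j-1)) + u (t j)) - (1/(t j - t (j-1))) *\<^sub>R integral {t (j-1)..t j} u"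

lemma g0: "\<gamma> > 0" using gamma by simp
lemma tau_pos: "tau > 0" using tstep_pos[OF T N1] .
lemma t_less: "j < k \<Longrightarrow> t j < t k" using mesh_less[OF T g0 N1] .
lemma t_le: "j \<le> k \<Longrightarrow> t j \<le> t k" using mesh_le[OF T g0 N1] .
lemma t_pos: "j \<ge> 1 \<Longrightarrow> t j > 0" using mesh_pos[OF T g0 N1] .
lemma t_N: "t N = T" using mesh_N[OF T g0 N1] .
lemma t_le_T: "j \<le> N \<Longrightarrow> t j \<le> T" using t_le[of j N] t_N by simp
lemma t_0: "t 0 = 0" by (simp add: mesh_0)
lemma t_eq: "t j = real j powr \<gamma> * tau powr \<gamma>" using mesh_eq[OF T] .

lemma e0: "e 0 = 0"
proof -
  have "uh 0 = u 0" using interp by (simp add: is_avg_interp_def)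
  then show ?thesis by (simp add: e_def t_0)
qed

lemma uh_lin: "n \<in> {1..N} \<Longrightarrow> s \<in> {t (n-1)..t n} \<Longrightarrow>
   uh s = ((t n - s) / (t n - t (n-1))) *\<^sub>R uh (t (n-1)) + ((s - t (n-1)) / (t n - t (n-1))) *\<^sub>R uh (t n)"
  using interp[unfolded is_avg_interp_def, THEN conjunct2, THEN conjunct2, THEN conjunct1]
  by (elim ballE) auto

lemma uh_int: "n \<in> {1..N} \<Longrightarrow> integral {t (n-1)..t n} uh = integral {t (n-1)..t n} u"
  using interp[unfolded is_avg_interp_def, THEN conjunct2, THEN conjunct2, THEN conjunct2]
  by (elim ballE) auto

lemma uh_cont: "continuous_on {0..T} uh"
  using interp t_N unfolding is_avg_interp_def by simp

lemma rec: assumes n: "n \<in> {1..N}" shows "e n + e (n-1) = 2 *\<^sub>R eta n"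
proof -
  define a where "a = t (n-1)"
  define b where "b = t n"
  have ab: "a < b" using n t_less[of "n-1" n] by (auto simp: a_def b_def)
  have L: "uh s = ((b - s)/(b - a)) *\<^sub>R uh a + ((s - a)/(b - a)) *\<^sub>R uh b" if "s \<in> {a..b}" for s
    using uh_lin[OF n, of s] that unfolding a_def b_def by blast
  have "integral {a..b} uh = integral {a..b} (\<lambda>s. ((b - s)/(b - a)) *\<^sub>R uh a + ((s - a)/(b - a)) *\<^sub>R uh b)"
    by (rule integral_cong) (rule L)
  also have "\<dots> = ((b - a)/2) *\<^sub>R (uh a + uh b)"
    by (rule integral_unique[OF lin_integral[OF ab]])
  finally have I: "integral {a..b} u = ((b - a)/2) *\<^sub>R (uh a + uh b)"
    using uh_int[OF n] unfolding a_def b_def by simp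
  have E: "eta n = (1/2) *\<^sub>R (u a + u b) - (1/(b-a)) *\<^sub>R integral {a..b} u"
    unfolding eta_def a_def b_def ..
  have "(1/(b-a)) *\<^sub>R integral {a..b} u = (1/2) *\<^sub>R (uh a + uh b)"
    unfolding I using ab by simp
  then have "eta n = (1/2) *\<^sub>R (u a + u b) - (1/2) *\<^sub>R (uh a + uh b)"
    using E by simp
  then show ?thesis
    unfolding e_def a_def b_def by (simp only: rec_aux)
qed

lemma psi_split:
  assumes n: "n \<in> {1..N}" and s: "s \<in> {t (n-1)..t n}"
  shows "u s - uh s = (u s - (((t n - s) / (t n - t (n-1))) *\<^sub>R u (t (n-1)) + ((s - t (n-1)) / (t n - t (n-1))) *\<^sub>R u (t n)))
     + (((t n - s) / (t n - t (n-1))) *\<^sub>R e (n-1) + ((s - t (n-1)) / (t n - t (n-1))) *\<^sub>R e n)"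
  unfolding uh_lin[OF n s] e_def by (rule split_aux)

end

context setting begin

definition "p = \<gamma> * \<sigma>"
definition "C0 = 2 * M / \<sigma>"
definition "c2 = M * (3 powr \<gamma>) powr \<bar>\<sigma> - 2\<bar>"
definition "c3 = M * (3 powr \<gamma>) powr \<bar>\<sigma> - 3\<bar>"
definition "Csd = 2 * (\<gamma> * (\<gamma> - 1) * 3 powr \<bar>\<gamma> - 2\<bar>)"
definition "Cw = \<gamma>^2 * c2 / 12"
definition "Cr = 3/2 * c3 * \<gamma>^3"
definition "Cd = (2 * \<gamma> * Csd * c2 + \<gamma>^3 * c3) / 12"
definition "Cb = 2 * C0 + 2 * Cw + 2 * Cr + Cd"
definition "Ci = C0 + c2 * \<gamma>^2"
definition "CS = (SOME CS. CS \<ge> 0 \<and> (\<forall>n\<ge>1. (\<Sum>j=1..n. real j powr (p - 2 - 1)) \<le> CS * Phi (p - 2) n))"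
definition "Cfin = Ci + Cb * CS + Cw"

lemma CS: "CS \<ge> 0" "\<And>n. n \<ge> 1 \<Longrightarrow> (\<Sum>j=1..n. real j powr (p - 2 - 1)) \<le> CS * Phi (p - 2) n"
proof -
  have "\<exists>CS\<ge>0. \<forall>n\<ge>1. (\<Sum>j=1..n. real j powr (p - 2 - 1)) \<le> CS * Phi (p - 2) n"
    by (rule sum_pow_bound)
  then have "CS \<ge> 0 \<and> (\<forall>n\<ge>1. (\<Sum>j=1..n. real j powr (p - 2 - 1)) \<le> CS * Phi (p - 2) n)"
    unfolding CS_def by (rule someI_ex[where P = "\<lambda>CS. CS \<ge> 0 \<and> (\<forall>n\<ge>1. (\<Sum>j=1..n. real j powr (p - 2 - 1)) \<le> CS * Phi (p - 2) n)"])
  then show "CS \<ge> 0" "\<And>n. n \<ge> 1 \<Longrightarrow> (\<Sum>j=1..n. real j powr (p - 2 - 1)) \<le> CS * Phi (p - 2) n"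
    by auto
qed

lemma consts_nonneg: "C0 \<ge> 0" "c2 \<ge> 0" "c3 \<ge> 0" "Csd \<ge> 0" "Cw \<ge> 0" "Cr \<ge> 0" "Cd \<ge> 0"
  "Cb \<ge> 0" "Ci \<ge> 0" "Cfin \<ge> 0"
proof -
  show a: "C0 \<ge> 0" using M0 sigma by (simp add: C0_def)
  show b: "c2 \<ge> 0" using M0 by (simp add: c2_def)
  show c: "c3 \<ge> 0" using M0 by (simp add: c3_def)
  show d: "Csd \<ge> 0" using gamma by (simp add: Csd_def)
  show e: "Cw \<ge> 0" using b by (simp add: Cw_def)
  show f: "Cr \<ge> 0" using c gamma by (simp add: Cr_def)
  show g: "Cd \<ge> 0" using b c d gamma by (simp add: Cd_def)
  show h: "Cb \<ge> 0" using a e f g by (simp add: Cb_def)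
  show i: "Ci \<ge> 0" using a b by (simp add: Ci_def)
  show "Cfin \<ge> 0" using i h e CS(1) by (simp add: Cfin_def)
qed

end

context mesh_setting begin

definition "H j = \<gamma> * tau powr \<gamma> * real j powr (\<gamma> - 1)"

lemma tpow: "t j powr \<sigma> = real j powr p * tau powr p"
proof -
  have "t j powr \<sigma> = (real j powr \<gamma>) powr \<sigma> * (tau powr \<gamma>) powr \<sigma>"
    unfolding t_eq by (rule powr_mult)
  then show ?thesis by (simp add: powr_powr p_def)
qed

lemma t1: "t 1 = tau powr \<gamma>" using t_eq[of 1] by simp

lemma h_pos: "j \<ge> 1 \<Longrightarrow> t j - t (j-1) > 0" using t_less[of "j-1" j] by simp

lemma h_eq: "j \<ge> 1 \<Longrightarrow> t j - t (j-1) = tau powr \<gamma> * (real j powr \<gamma> - real (j-1) powr \<gamma>)"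
  using t_eq[of j] t_eq[of "j-1"] by (simp add: algebra_simps)

lemma h_bound: "j \<ge> 1 \<Longrightarrow> t j - t (j-1) \<le> H j"
proof -
  assume j: "j \<ge> 1"
  have "t j - t (j-1) = tau powr \<gamma> * (real j powr \<gamma> - real (j-1) powr \<gamma>)" using h_eq[OF j] .
  also have "\<dots> \<le> tau powr \<gamma> * (\<gamma> * real j powr (\<gamma> - 1))"
    by (rule mult_left_mono[OF tau_bound[OF gamma j]]) simp
  finally show ?thesis by (simp add: H_def mult_ac)
qed

lemma H_mono: "1 \<le> i \<Longrightarrow> i \<le> j \<Longrightarrow> H i \<le> H j"
  unfolding H_def using gamma by (intro mult_left_mono powr_mono2) auto

lemma H_eq: "j \<ge> 1 \<Longrightarrow> H j = \<gamma> * t j / real j"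
proof -
  assume j: "j \<ge> 1"
  have "real j powr (\<gamma> - 1) = real j powr \<gamma> / real j" using j by (simp add: powr_diff)
  then show ?thesis unfolding H_def t_eq by simp
qed

lemma H_pos: "j \<ge> 1 \<Longrightarrow> H j > 0"
  using tau_pos gamma by (simp add: H_def)

lemma sd_bound: assumes j: "j \<ge> 3" shows "\<bar>(t j - t (j-1)) - (t (j-1) - t (j-2))\<bar> \<le> Csd * t j / real j ^ 2"
proof -
  have e: "(t j - t (j-1)) - (t (j-1) - t (j-2)) =
      tau powr \<gamma> * ((real j powr \<gamma> - real (j-1) powr \<gamma>) - (real (j-1) powr \<gamma> - real (j-2) powr \<gamma>))"
    unfolding t_eq[of j] t_eq[of "j-1"] t_eq[of "j-2"] by (simp add: algebra_simps)
  have "\<bar>(real j powr \<gamma> - real (j-1) powr \<gamma>) - (real (j-1) powr \<gamma> - real (j-2) powr \<gamma>)\<bar>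
      \<le> Csd * real j powr (\<gamma> - 2)"
    using second_diff[OF gamma j] by (simp add: Csd_def mult.assoc)
  moreover have ta: "\<bar>tau powr \<gamma>\<bar> = tau powr \<gamma>" by simp
  ultimately have "\<bar>(t j - t (j-1)) - (t (j-1) - t (j-2))\<bar> \<le> tau powr \<gamma> * (Csd * real j powr (\<gamma> - 2))"
    unfolding e abs_mult ta by (intro mult_left_mono) auto
  also have "real j powr (\<gamma> - 2) = real j powr \<gamma> / real j ^ 2" using j by (simp add: powr_diff)
  finally show ?thesis unfolding t_eq by (simp add: algebra_simps)
qed

lemma ratio: assumes "1 \<le> lo" "lo \<le> j" "j \<le> 3 * lo" shows "t j \<le> 3 powr \<gamma> * t lo"
proof -
  have "t j = (real j * tau) powr \<gamma>" by (simp add: mesh_def)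
  also have "\<dots> \<le> (3 * (real lo * tau)) powr \<gamma>"
    using assms tau_pos g0 by (intro powr_mono2) auto
  also have "\<dots> = 3 powr \<gamma> * t lo" by (simp add: powr_mult mesh_def)
  finally show ?thesis .
qed

lemma K23: assumes "1 \<le> lo" "lo \<le> j" "j \<le> 3 * lo" "j \<le> N" and s: "s \<in> {t lo..t j}"
  shows "norm (u2 s) \<le> c2 * t j powr (\<sigma> - 2)" "norm (u3 s) \<le> c3 * t j powr (\<sigma> - 3)"
proof -
  have lo0: "t lo > 0" using t_pos assms by simp
  have s0: "s \<in> {0<..T}" using s lo0 t_le_T[OF assms(4)] by auto
  have r: "t j \<le> 3 powr \<gamma> * t lo" by (rule ratio) (use assms in auto)
  have "s powr (\<sigma> - 2) \<le> (3 powr \<gamma>) powr \<bar>\<sigma> - 2\<bar> * t j powr (\<sigma> - 2)"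
    by (rule powr_cmp1[OF lo0]) (use s r in auto)
  then show "norm (u2 s) \<le> c2 * t j powr (\<sigma> - 2)"
    using b2[OF s0] M0 unfolding c2_def
    by (smt (verit) mult.assoc mult_left_mono)
  have "s powr (\<sigma> - 3) \<le> (3 powr \<gamma>) powr \<bar>\<sigma> - 3\<bar> * t j powr (\<sigma> - 3)"
    by (rule powr_cmp1[OF lo0]) (use s r in auto)
  then show "norm (u3 s) \<le> c3 * t j powr (\<sigma> - 3)"
    using b3[OF s0] M0 unfolding c3_def
    by (smt (verit) mult.assoc mult_left_mono)
qed

end

context mesh_setting begin

definition "W j = (if j \<ge> 2 then ((t j - t (j-1))^2/12) *\<^sub>R u2 (t (j-1)) else 0)"
definition "R j = eta j - W j"

lemma conv: "j \<ge> 1 \<Longrightarrow> t j powr \<sigma> / real j ^ k = tau powr p * real j powr (p - real k)"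
proof -
  assume j: "j \<ge> 1"
  have "real j powr (p - real k) = real j powr p / real j ^ k"
    using j by (simp add: powr_diff powr_realpow)
  then show ?thesis by (simp add: tpow)
qed

lemma W_bound: assumes j: "2 \<le> j" "j \<le> N" shows "norm (W j) \<le> Cw * (t j powr \<sigma> / real j ^ 2)"
proof -
  define h where "h = t j - t (j-1)"
  have h0: "0 < h" using h_pos[of j] j by (simp add: h_def)
  have hH: "h \<le> H j" using h_bound[of j] j by (simp add: h_def)
  have A: "norm (u2 (t (j-1))) \<le> c2 * t j powr (\<sigma> - 2)"
    by (rule K23(1)[of "j-1"]) (use j t_le[of "j-1" j] in auto)
  have "norm (W j) = h^2/12 * norm (u2 (t (j-1)))" using j by (simp add: W_def h_def)
  also have "\<dots> \<le> (H j)^2/12 * (c2 * t j powr (\<sigma> - 2))"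
    using h0 hH A by (intro mult_mono divide_right_mono power_mono) auto
  also have "\<dots> = \<gamma>^2 * c2 / 12 * ((t j)^2 * t j powr (\<sigma> - 2)) / real j ^ 2"
    using H_eq[of j] j by (simp add: power_divide power_mult_distrib mult_ac)
  also have "\<dots> = Cw * (t j powr \<sigma> / real j ^ 2)"
    using pw2[of "t j" \<sigma>] t_pos[of j] j by (simp add: Cw_def)
  finally show ?thesis .
qed

lemma R_bound: assumes j: "2 \<le> j" "j \<le> N" shows "norm (R j) \<le> Cr * (t j powr \<sigma> / real j ^ 3)"
proof -
  define a where "a = t (j-1)"
  define b where "b = t j"
  have ab: "a < b" using h_pos[of j] j by (simp add: a_def b_def)
  have a0: "0 < a" using t_pos[of "j-1"] j by (simp add: a_def)
  have bT: "b \<le> T" using t_le_T[of j] j by (simp add: b_def)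
  note D = dsub[OF a0 bT]
  have K: "norm (u3 s) \<le> c3 * t j powr (\<sigma> - 3)" if "s \<in> {a..b}" for s
    by (rule K23(2)[of "j-1"]) (use j that in \<open>auto simp: a_def b_def\<close>)
  have "norm (R j) = norm ((1/2) *\<^sub>R (u a + u b) - (1/(b-a)) *\<^sub>R integral {a..b} u - ((b-a)^2/12) *\<^sub>R u2 a)"
    using j by (simp add: R_def W_def eta_def a_def b_def)
  also have "\<dots> \<le> 3/2 * (c3 * t j powr (\<sigma> - 3)) * (b-a)^3"
    by (rule eta_expand[OF ab D K])
  also have "\<dots> \<le> 3/2 * (c3 * t j powr (\<sigma> - 3)) * (H j)^3"
    using ab h_bound[of j] j consts_nonneg(3)
    by (intro mult_left_mono power_mono) (auto simp: a_def b_def)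
  also have "\<dots> = 3/2 * c3 * \<gamma>^3 * ((t j)^3 * t j powr (\<sigma> - 3)) / real j ^ 3"
    using H_eq[of j] j by (simp add: power_divide power_mult_distrib mult_ac)
  also have "\<dots> = Cr * (t j powr \<sigma> / real j ^ 3)"
    using pw3[of "t j" \<sigma>] t_pos[of j] j by (simp add: Cr_def)
  finally show ?thesis .
qed

lemma R1_bound: "norm (R 1) \<le> C0 * tau powr p"
proof -
  define b where "b = t 1"
  have b0: "0 < b" using t_pos[of 1] by (simp add: b_def)
  have bT: "b \<le> T" using t_le_T[of 1] N1 by (simp add: b_def)
  have bs: "b powr \<sigma> = tau powr p" using tpow[of 1] by (simp add: b_def)
  have osc: "norm (u x - u y) \<le> C0 * tau powr p" if "x \<in> {0..b}" "y \<in> {0..b}" for x y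
    using osc0[OF that bT] bs by (simp add: C0_def)
  have cf: "continuous_on {0..b} u" by (rule continuous_on_subset[OF cont]) (use bT in auto)
  have B: "norm ((1/2) *\<^sub>R (u 0 + u b) - u x) \<le> C0 * tau powr p" if x: "x \<in> {0..b}" for x
  proof -
    have "(1/2) *\<^sub>R (u 0 + u b) - u x = (1/2) *\<^sub>R (u 0 - u x) + (1/2) *\<^sub>R (u b - u x)"
      by (simp add: algebra_simps flip: scaleR_add_right)
    also have "norm \<dots> \<le> (1/2) * norm (u 0 - u x) + (1/2) * norm (u b - u x)"
      by (rule order_trans[OF norm_triangle_ineq]) simp
    also have "\<dots> \<le> (1/2) * (C0 * tau powr p) + (1/2) * (C0 * tau powr p)"
      using osc[of 0 x] osc[of b x] x b0 by (intro add_mono mult_left_mono) auto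
    finally show ?thesis by simp
  qed
  have "norm (R 1) = norm ((1/2) *\<^sub>R (u 0 + u b) - (1/(b-0)) *\<^sub>R integral {0..b} u)"
    by (simp add: R_def W_def eta_def b_def t_0)
  also have "\<dots> \<le> C0 * tau powr p"
    by (rule avg_dev[OF _ _ B]) (use b0 cf in auto)
  finally show ?thesis .
qed

end

lemma diff_split:
  fixes A B :: "'a::real_vector"
  shows "x *\<^sub>R A - y *\<^sub>R B = (x - y) *\<^sub>R A + y *\<^sub>R (A - B)"
  by (simp add: scaleR_diff_left scaleR_diff_right)

lemma alg_Wd:
  fixes t P2 P3 Q j g Cs c2 c3 :: real
  assumes "t^2 * P2 = Q" "t^3 * P3 = Q" "j > 0"
  shows "(Cs * t / j^2 * (2 * (g * t / j))) / 12 * (c2 * P2) + (g * t / j)^2 / 12 * (c3 * P3 * (g * t / j))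
       = (2 * g * Cs * c2 + g^3 * c3) / 12 * (Q / j^3)"
proof -
  have "(Cs * t / j^2 * (2 * (g * t / j))) / 12 * (c2 * P2) + (g * t / j)^2 / 12 * (c3 * P3 * (g * t / j))
      = (2 * g * Cs * c2 * (t^2 * P2) + g^3 * c3 * (t^3 * P3)) / (12 * j^3)"
    using assms(3) by (simp add: field_simps power2_eq_square power3_eq_cube)
  also have "\<dots> = (2 * g * Cs * c2 + g^3 * c3) / 12 * (Q / j^3)"
    unfolding assms(1,2) using assms(3) by (simp add: field_simps)
  finally show ?thesis .
qed

context mesh_setting begin

lemma Wd_bound: assumes j: "3 \<le> j" "j \<le> N" shows "norm (W j - W (j-1)) \<le> Cd * (t j powr \<sigma> / real j ^ 3)"
proof -
  have jj: "j - 1 - 1 = j - 2" by simp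
  define hj where "hj = t j - t (j-1)"
  define hp where "hp = t (j-1) - t (j-2)"
  define A where "A = u2 (t (j-1))"
  define B where "B = u2 (t (j-2))"
  have hj0: "0 < hj" using h_pos[of j] j by (simp add: hj_def)
  have hp0: "0 < hp" using h_pos[of "j-1"] j jj by (simp add: hp_def)
  have hjH: "hj \<le> H j" using h_bound[of j] j by (simp add: hj_def)
  have hpH: "hp \<le> H j"
  proof -
    have "t (j-1) - t (j-1-1) \<le> H (j-1)" by (rule h_bound) (use j in simp)
    moreover have "H (j-1) \<le> H j" by (rule H_mono) (use j in auto)
    ultimately show ?thesis unfolding hp_def jj[symmetric] by linarith
  qed
  have Wj: "W j = (hj^2/12) *\<^sub>R A" using j by (simp add: W_def hj_def A_def)
  have Wp: "W (j-1) = (hp^2/12) *\<^sub>R B" using j jj by (simp add: W_def hp_def B_def)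
  have nA: "norm A \<le> c2 * t j powr (\<sigma> - 2)"
    unfolding A_def by (rule K23(1)[of "j-1"]) (use j t_le[of "j-1" j] in auto)
  have nAB: "norm (A - B) \<le> c3 * t j powr (\<sigma> - 3) * hp"
  proof -
    have lo0: "0 < t (j-2)" using t_pos[of "j-2"] j by simp
    have hiT: "t (j-1) \<le> T" using t_le_T[of "j-1"] j by simp
    have K: "norm (u3 s) \<le> c3 * t j powr (\<sigma> - 3)" if "s \<in> {t (j-2)..t (j-1)}" for s
      by (rule K23(2)[of "j-2"]) (use j that t_le[of "j-1" j] in auto)
    have "norm (u2 (t (j-1)) - u2 (t (j-2))) \<le> c3 * t j powr (\<sigma> - 3) * \<bar>t (j-1) - t (j-2)\<bar>"
      by (rule mvb[OF dsub(3)[OF lo0 hiT] K]) (use t_le[of "j-2" "j-1"] in auto)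
    then show ?thesis using hp0 by (simp add: A_def B_def hp_def)
  qed
  have sd: "\<bar>hj - hp\<bar> \<le> Csd * t j / real j ^ 2" using sd_bound[OF j(1)] by (simp add: hj_def hp_def)
  have e1: "hj^2/12 - hp^2/12 = (hj - hp) * (hj + hp) / 12" by (simp add: power2_eq_square algebra_simps)
  have "norm (W j - W (j-1)) = norm (((hj^2/12) - (hp^2/12)) *\<^sub>R A + (hp^2/12) *\<^sub>R (A - B))"
    unfolding Wj Wp by (simp only: diff_split)
  also have "\<dots> \<le> \<bar>hj - hp\<bar> * (hj + hp) / 12 * norm A + hp^2/12 * norm (A - B)"
    by (rule order_trans[OF norm_triangle_ineq]) (use hj0 hp0 in \<open>simp add: e1 abs_mult\<close>)
  also have "\<dots> \<le> (Csd * t j / real j ^ 2 * (2 * H j)) / 12 * (c2 * t j powr (\<sigma> - 2))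
                 + (H j)^2 / 12 * (c3 * t j powr (\<sigma> - 3) * H j)"
  proof (rule add_mono)
    show "\<bar>hj - hp\<bar> * (hj + hp) / 12 * norm A \<le> (Csd * t j / real j ^ 2 * (2 * H j)) / 12 * (c2 * t j powr (\<sigma> - 2))"
      using sd hjH hpH hj0 hp0 nA consts_nonneg(4) t_pos[of j] H_pos[of j] j
      by (intro mult_mono divide_right_mono) (auto intro!: mult_nonneg_nonneg divide_nonneg_nonneg)
    show "hp^2/12 * norm (A - B) \<le> (H j)^2 / 12 * (c3 * t j powr (\<sigma> - 3) * H j)"
      using hpH hp0 nAB consts_nonneg(3)
      by (intro mult_mono divide_right_mono power_mono order_trans[OF nAB]) auto
  qed
  also have "\<dots> = Cd * (t j powr \<sigma> / real j ^ 3)"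
  proof -
    have tp: "t j > 0" using t_pos j by simp
    have HE: "H j = \<gamma> * t j / real j" using H_eq j by simp
    show ?thesis
      unfolding HE Cd_def by (rule alg_Wd[OF pw2[OF tp] pw3[OF tp]]) (use j in simp)
  qed
  finally show ?thesis .
qed

lemma beta_bound: assumes j: "1 \<le> j" "j \<le> N"
  shows "norm (W j - W (j-1)) + 2 * norm (R j) \<le> Cb * (tau powr p * real j powr (p - 2 - 1))"
proof -
  note cn = consts_nonneg
  have tp: "tau powr p \<ge> 0" by simp
  consider "j = 1" | "j = 2" | "j \<ge> 3" using j by linarith
  then show ?thesis
  proof cases
    case 1
    have "norm (W j - W (j-1)) + 2 * norm (R j) \<le> 2 * (C0 * tau powr p)"
      using R1_bound 1 by (simp add: W_def)
    also have "\<dots> \<le> Cb * (tau powr p * real j powr (p - 2 - 1))"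
    proof -
      have "2 * C0 \<le> Cb" using cn by (simp add: Cb_def)
      then have "2 * C0 * tau powr p \<le> Cb * tau powr p" using tp by (rule mult_right_mono)
      then show ?thesis using 1 by simp
    qed
    finally show ?thesis .
  next
    case 2
    have w: "norm (W 2) \<le> Cw * (tau powr p * 2 * 2 powr (p - 3))"
    proof -
      have "norm (W 2) \<le> Cw * (t 2 powr \<sigma> / real 2 ^ 2)" using W_bound[of 2] 2 j by simp
      also have "t 2 powr \<sigma> / real 2 ^ 2 = tau powr p * 2 powr (p - 2)" using conv[of 2 2] by simp
      also have "(2::real) powr (p - 2) = 2 * 2 powr (p - 3)"
        by (simp add: powr_diff)
      finally show ?thesis by (simp add: mult_ac)
    qed
    have r: "norm (R 2) \<le> Cr * (tau powr p * 2 powr (p - 3))"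
      using R_bound[of 2] 2 j conv[of 2 3] by simp
    have "norm (W j - W (j-1)) + 2 * norm (R j) = norm (W 2) + 2 * norm (R 2)"
      using 2 by (simp add: W_def)
    also have "\<dots> \<le> (2 * Cw + 2 * Cr) * (tau powr p * 2 powr (p - 3))"
      using w r by (simp add: algebra_simps)
    also have "\<dots> \<le> Cb * (tau powr p * 2 powr (p - 3))"
      using cn by (intro mult_right_mono) (auto simp: Cb_def)
    finally show ?thesis using 2 by (simp add: diff_diff_eq)
  next
    case 3
    have "norm (W j - W (j-1)) + 2 * norm (R j) \<le> Cd * (t j powr \<sigma> / real j ^ 3) + 2 * (Cr * (t j powr \<sigma> / real j ^ 3))"
      using Wd_bound[OF 3 j(2)] R_bound[of j] 3 j by (intro add_mono) auto
    also have "\<dots> = (Cd + 2 * Cr) * (tau powr p * real j powr (p - 3))"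
      using conv[of j 3] j by (simp add: algebra_simps)
    also have "\<dots> \<le> Cb * (tau powr p * real j powr (p - 3))"
      using cn by (intro mult_right_mono) (auto simp: Cb_def)
    finally show ?thesis by (simp add: diff_diff_eq)
  qed
qed

end

lemma interp_id:
  fixes ua ub us v :: "'a::real_vector"
  assumes "l + m = 1" "l * (a - s) + m * (b - s) = 0"
  shows "us - (l *\<^sub>R ua + m *\<^sub>R ub) = - (l *\<^sub>R (ua - us - (a - s) *\<^sub>R v) + m *\<^sub>R (ub - us - (b - s) *\<^sub>R v))"
proof -
  have "l *\<^sub>R (ua - us - (a - s) *\<^sub>R v) + m *\<^sub>R (ub - us - (b - s) *\<^sub>R v)
      = l *\<^sub>R ua + m *\<^sub>R ub - (l + m) *\<^sub>R us - (l * (a - s) + m * (b - s)) *\<^sub>R v"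
    by (simp add: algebra_simps)
  then show ?thesis using assms by simp
qed

lemma interp_id1:
  fixes ua ub us :: "'a::real_vector"
  assumes "l + m = 1"
  shows "us - (l *\<^sub>R ua + m *\<^sub>R ub) = l *\<^sub>R (us - ua) + m *\<^sub>R (us - ub)"
proof -
  have "l *\<^sub>R (us - ua) + m *\<^sub>R (us - ub) = (l + m) *\<^sub>R us - (l *\<^sub>R ua + m *\<^sub>R ub)"
    by (simp add: algebra_simps)
  then show ?thesis using assms by simp
qed

context mesh_setting begin

lemma e_bound: assumes k: "1 \<le> k" "k \<le> N"
  shows "norm (e k) \<le> (Cb * CS + Cw) * (tau powr p * Phi (p - 2) k)"
proof -
  note cn = consts_nonneg
  have tp: "tau powr p \<ge> 0" by simp
  have "norm (e k - W k) \<le> (\<Sum>j=1..k. Cb * (tau powr p * real j powr (p - 2 - 1)))"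
  proof (rule rec_bound[where r = R])
    show "e 0 = 0" by (rule e0)
    show "W 0 = 0" by (simp add: W_def)
    fix j assume j: "1 \<le> j" "j \<le> k"
    show "e j + e (j-1) = 2 *\<^sub>R (W j + R j)" using rec[of j] j k by (simp add: R_def)
    show "norm (W j - W (j-1)) + 2 * norm (R j) \<le> Cb * (tau powr p * real j powr (p - 2 - 1))"
      by (rule beta_bound) (use j k in auto)
  qed
  also have "\<dots> = Cb * tau powr p * (\<Sum>j=1..k. real j powr (p - 2 - 1))"
    by (simp add: sum_distrib_left mult.assoc)
  also have "\<dots> \<le> Cb * tau powr p * (CS * Phi (p - 2) k)"
    using CS(2)[OF k(1)] cn tp by (intro mult_left_mono) auto
  finally have A: "norm (e k - W k) \<le> Cb * CS * (tau powr p * Phi (p - 2) k)" by (simp add: mult_ac)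
  have B: "norm (W k) \<le> Cw * (tau powr p * Phi (p - 2) k)"
  proof (cases "k = 1")
    case True
    have "0 \<le> Cw * (tau powr p * Phi (p - 2) k)"
      using cn Phi_ge1[of k "p - 2"] k by auto
    then show ?thesis using True by (simp add: W_def)
  next
    case False
    then have k2: "2 \<le> k" using k by simp
    have "norm (W k) \<le> Cw * (t k powr \<sigma> / real k ^ 2)" by (rule W_bound) (use k2 k in auto)
    also have "\<dots> = Cw * (tau powr p * real k powr (p - 2))" using conv[of k 2] k by simp
    also have "\<dots> \<le> Cw * (tau powr p * Phi (p - 2) k)"
      using Phi_pow[of k "p - 2"] k cn tp by (intro mult_left_mono) auto
    finally show ?thesis .
  qed
  have "norm (e k) \<le> norm (e k - W k) + norm (W k)"
    using norm_triangle_ineq[of "e k - W k" "W k"] by simp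
  also have "\<dots> \<le> (Cb * CS + Cw) * (tau powr p * Phi (p - 2) k)"
    using A B by (simp add: algebra_simps)
  finally show ?thesis .
qed

lemma e_bound_n: assumes "k \<le> n" "1 \<le> n" "n \<le> N"
  shows "norm (e k) \<le> (Cb * CS + Cw) * (tau powr p * Phi (p - 2) n)"
proof (cases "k = 0")
  case True
  have "0 \<le> (Cb * CS + Cw) * (tau powr p * Phi (p - 2) n)"
    using consts_nonneg CS(1) Phi_ge1[of n "p - 2"] assms by auto
  then show ?thesis using True e0 by simp
next
  case False
  then have k1: "1 \<le> k" by simp
  have "norm (e k) \<le> (Cb * CS + Cw) * (tau powr p * Phi (p - 2) k)" by (rule e_bound) (use k1 assms in auto)
  also have "\<dots> \<le> (Cb * CS + Cw) * (tau powr p * Phi (p - 2) n)"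
    using Phi_mono[OF k1 assms(1)] consts_nonneg CS(1) by (intro mult_left_mono) auto
  finally show ?thesis .
qed

lemma interp_bound: assumes n: "n \<in> {1..N}" and s: "s \<in> {t (n-1)..t n}"
  shows "norm (u s - (((t n - s) / (t n - t (n-1))) *\<^sub>R u (t (n-1)) + ((s - t (n-1)) / (t n - t (n-1))) *\<^sub>R u (t n)))
     \<le> Ci * (tau powr p * Phi (p - 2) n)"
proof -
  note cn = consts_nonneg
  have tp: "tau powr p \<ge> 0" by simp
  define a where "a = t (n-1)"
  define b where "b = t n"
  define l where "l = (b - s) / (b - a)"
  have ab: "a < b" using h_pos[of n] n by (simp add: a_def b_def)
  have s': "a \<le> s" "s \<le> b" using s by (auto simp: a_def b_def)
  have l01: "0 \<le> l" "l \<le> 1" using ab s' by (auto simp: l_def divide_simps)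
  have m: "(s - a) / (b - a) = 1 - l" using ab by (simp add: l_def field_simps)
  have Ph: "1 \<le> Phi (p - 2) n" using Phi_ge1 n by simp
  show ?thesis
  proof (cases "n = 1")
    case True
    have a0: "a = 0" using True by (simp add: a_def t_0)
    have bT: "b \<le> T" using t_le_T[of 1] N1 True by (simp add: b_def)
    have bs: "b powr \<sigma> = tau powr p" using tpow[of 1] True by (simp add: b_def)
    have osc: "norm (u x - u y) \<le> C0 * tau powr p" if "x \<in> {0..b}" "y \<in> {0..b}" for x y
      using osc0[OF that bT] bs by (simp add: C0_def)
    have "norm (u s - (l *\<^sub>R u a + (1 - l) *\<^sub>R u b)) = norm (l *\<^sub>R (u s - u a) + (1 - l) *\<^sub>R (u s - u b))"
      by (subst interp_id1) auto
    also have "\<dots> \<le> max (norm (u s - u a)) (norm (u s - u b))" by (rule cvx_norm[OF l01])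
    also have "\<dots> \<le> C0 * tau powr p" using osc[of s a] osc[of s b] s' a0 ab by auto
    also have "\<dots> \<le> Ci * (tau powr p * Phi (p - 2) n)"
    proof -
      have "C0 \<le> Ci" using cn by (simp add: Ci_def)
      moreover have "tau powr p \<le> tau powr p * Phi (p - 2) n" using Ph tp
        by (metis mult.right_neutral mult_left_mono)
      ultimately show ?thesis using cn tp by (meson mult_mono order_trans mult_nonneg_nonneg order.refl zero_le_one Ph)
    qed
    finally show ?thesis unfolding a_def b_def l_def m[unfolded a_def b_def l_def] .
  next
    case False
    then have n2: "2 \<le> n" using n by simp
    have a0: "0 < a" using t_pos[of "n-1"] n2 by (simp add: a_def)
    have bT: "b \<le> T" using t_le_T[of n] n by (simp add: b_def)
    note D = dsub[OF a0 bT]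
    define K where "K = c2 * t n powr (\<sigma> - 2)"
    have K: "norm (u2 x) \<le> K" if "x \<in> {a..b}" for x
      unfolding K_def by (rule K23(1)[of "n-1"]) (use n2 n that in \<open>auto simp: a_def b_def\<close>)
    have K0: "0 \<le> K" using cn by (simp add: K_def)
    have sab: "s \<in> {a..b}" using s' by simp
    have Ra: "norm (u a - u s - (a - s) *\<^sub>R u1 s) \<le> K * (b - a)^2"
    proof -
      have "norm (u a - u s - (a - s) *\<^sub>R u1 s) \<le> K * (a - s)^2"
        by (rule taylor2[OF D(1) D(2) K sab]) (use ab in auto)
      also have "\<dots> \<le> K * (b - a)^2"
        using s' K0 by (intro mult_left_mono) (auto simp: abs_le_square_iff[symmetric])
      finally show ?thesis .
    qed
    have Rb: "norm (u b - u s - (b - s) *\<^sub>R u1 s) \<le> K * (b - a)^2"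
    proof -
      have "norm (u b - u s - (b - s) *\<^sub>R u1 s) \<le> K * (b - s)^2"
        by (rule taylor2[OF D(1) D(2) K sab]) (use ab in auto)
      also have "\<dots> \<le> K * (b - a)^2"
        using s' K0 by (intro mult_left_mono) (auto simp: abs_le_square_iff[symmetric])
      finally show ?thesis .
    qed
    have id2: "l * (a - s) + (1 - l) * (b - s) = 0" using ab by (simp add: l_def field_simps)
    have ii: "u s - (l *\<^sub>R u a + (1 - l) *\<^sub>R u b)
        = - (l *\<^sub>R (u a - u s - (a - s) *\<^sub>R u1 s) + (1 - l) *\<^sub>R (u b - u s - (b - s) *\<^sub>R u1 s))"
      by (rule interp_id[OF _ id2]) simp
    have "norm (u s - (l *\<^sub>R u a + (1 - l) *\<^sub>R u b))
        = norm (l *\<^sub>R (u a - u s - (a - s) *\<^sub>R u1 s) + (1 - l) *\<^sub>R (u b - u s - (b - s) *\<^sub>R u1 s))"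
      unfolding ii norm_minus_cancel ..
    also have "\<dots> \<le> max (norm (u a - u s - (a - s) *\<^sub>R u1 s)) (norm (u b - u s - (b - s) *\<^sub>R u1 s))"
      by (rule cvx_norm[OF l01])
    also have "\<dots> \<le> K * (b - a)^2" using Ra Rb by simp
    also have "\<dots> \<le> K * (H n)^2"
      using K0 ab h_bound[of n] n by (intro mult_left_mono power_mono) (auto simp: a_def b_def)
    also have "\<dots> = c2 * \<gamma>^2 * (t n powr \<sigma> / real n ^ 2)"
    proof -
      have HE: "H n = \<gamma> * t n / real n" using H_eq n by simp
      have tp': "t n > 0" using t_pos n by simp
      show ?thesis unfolding K_def HE using pw2[OF tp', of \<sigma>] n
        by (simp add: power_divide power_mult_distrib field_simps)
    qed
    also have "\<dots> = c2 * \<gamma>^2 * (tau powr p * real n powr (p - 2))" using conv[of n 2] n by simp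
    also have "\<dots> \<le> c2 * \<gamma>^2 * (tau powr p * Phi (p - 2) n)"
      using Phi_pow[of n "p - 2"] n cn tp by (intro mult_left_mono) auto
    also have "\<dots> \<le> Ci * (tau powr p * Phi (p - 2) n)"
      using cn Ph tp by (intro mult_right_mono) (auto simp: Ci_def)
    finally show ?thesis unfolding a_def b_def l_def m[unfolded a_def b_def l_def] .
  qed
qed

lemma psi_bound: assumes n: "n \<in> {1..N}" and s: "s \<in> {t (n-1)..t n}"
  shows "norm (u s - uh s) \<le> Cfin * (tau powr p * Phi (p - 2) n)"
proof -
  define a where "a = t (n-1)"
  define b where "b = t n"
  define l where "l = (b - s) / (b - a)"
  have ab: "a < b" using h_pos[of n] n by (simp add: a_def b_def)
  have s': "a \<le> s" "s \<le> b" using s by (auto simp: a_def b_def)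
  have l01: "0 \<le> l" "l \<le> 1" using ab s' by (auto simp: l_def divide_simps)
  have m: "(s - a) / (b - a) = 1 - l" using ab by (simp add: l_def field_simps)
  have "norm (u s - uh s) \<le> norm (u s - (l *\<^sub>R u a + (1 - l) *\<^sub>R u b)) + norm (l *\<^sub>R e (n-1) + (1 - l) *\<^sub>R e n)"
    using psi_split[OF n s] norm_triangle_ineq unfolding a_def[symmetric] b_def[symmetric] l_def[symmetric] m
    by metis
  also have "\<dots> \<le> Ci * (tau powr p * Phi (p - 2) n) + (Cb * CS + Cw) * (tau powr p * Phi (p - 2) n)"
  proof (rule add_mono)
    show "norm (u s - (l *\<^sub>R u a + (1 - l) *\<^sub>R u b)) \<le> Ci * (tau powr p * Phi (p - 2) n)"
      using interp_bound[OF n s] unfolding a_def[symmetric] b_def[symmetric] l_def[symmetric] m .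
    have "norm (l *\<^sub>R e (n-1) + (1 - l) *\<^sub>R e n) \<le> max (norm (e (n-1))) (norm (e n))"
      by (rule cvx_norm[OF l01])
    also have "\<dots> \<le> (Cb * CS + Cw) * (tau powr p * Phi (p - 2) n)"
      using e_bound_n[of "n-1" n] e_bound_n[of n n] n by auto
    finally show "norm (l *\<^sub>R e (n-1) + (1 - l) *\<^sub>R e n) \<le> (Cb * CS + Cw) * (tau powr p * Phi (p - 2) n)" .
  qed
  also have "\<dots> = Cfin * (tau powr p * Phi (p - 2) n)" by (simp add: Cfin_def algebra_simps)
  finally show ?thesis .
qed

lemma target: assumes n: "n \<in> {1..N}"
  shows "tau powr p * Phi (p - 2) n \<le> (if \<gamma> = 2 / \<sigma>
                     then tau\<^sup>2 * (1 + ln (t n / t 1))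
                     else tau powr (min (\<gamma> * \<sigma>) 2) * t n powr (max 0 (\<sigma> - 2 / \<gamma>)))"
proof -
  have n1: "1 \<le> n" using n by simp
  have tp: "tau > 0" by (rule tau_pos)
  have rn: "real n \<ge> 1" using n1 by simp
  show ?thesis
  proof (cases "\<gamma> = 2 / \<sigma>")
    case True
    have p2: "p = 2" unfolding p_def using True sigma by simp
    have q: "t n / t 1 = real n powr \<gamma>" using tp unfolding t_eq by simp
    have "ln (t n / t 1) = \<gamma> * ln (real n)" unfolding q using rn by (simp add: ln_powr)
    moreover have "ln (real n) \<le> \<gamma> * ln (real n)"
    proof -
      have "0 \<le> ln (real n)" using rn by simp
      from mult_right_mono[OF gamma this] show ?thesis by simp
    qed
    ultimately have "1 + ln (real n) \<le> 1 + ln (t n / t 1)" by simp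
    then have "tau\<^sup>2 * (1 + ln (real n)) \<le> tau\<^sup>2 * (1 + ln (t n / t 1))" by (intro mult_left_mono) auto
    then show ?thesis using True p2 tp by (simp add: Phi_def powr_numeral)
  next
    case False
    then have pn2: "p \<noteq> 2" using sigma by (auto simp: p_def field_simps)
    show ?thesis
    proof (cases "p < 2")
      case True
      have neg: "\<sigma> - 2 / \<gamma> < 0" using True g0 by (simp add: p_def field_simps)
      have tn: "t n > 0" using t_pos n1 by simp
      show ?thesis using False True neg tn pn2 by (simp add: Phi_def p_def min_def max_def)
    next
      case False2: False
      then have pg: "p > 2" using pn2 by simp
      have pos: "\<sigma> - 2 / \<gamma> > 0" using pg g0 by (simp add: p_def field_simps)
      have "t n powr (\<sigma> - 2 / \<gamma>) = (real n powr \<gamma> * tau powr \<gamma>) powr (\<sigma> - 2 / \<gamma>)" by (simp add: t_eq)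
      also have "\<dots> = real n powr (p - 2) * tau powr (p - 2)"
        using g0 by (simp add: powr_mult powr_powr p_def algebra_simps)
      finally have te: "t n powr (\<sigma> - 2 / \<gamma>) = real n powr (p - 2) * tau powr (p - 2)" .
      have "tau powr p = tau powr 2 * tau powr (p - 2)" by (simp flip: powr_add)
      then have "tau powr p * Phi (p - 2) n = tau powr 2 * t n powr (\<sigma> - 2 / \<gamma>)"
        using pg pn2 te by (simp add: Phi_def)
      then show ?thesis using False pg pos by (simp add: p_def min_def max_def)
    qed
  qed
qed

end

theorem corollary3p3:
  fixes u u1 u2 u3 :: "real \<Rightarrow> 'a::{real_inner, complete_space}"
    and T \<sigma> \<gamma> M :: real
  assumes T: "T > 0" and sigma: "\<sigma> > 0" and gamma: "\<gamma> \<ge> 1"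
    and cont: "continuous_on {0..T} u"
    and d1: "\<And>s. s \<in> {0<..T} \<Longrightarrow> (u has_vector_derivative u1 s) (at s within {0..T})"
    and d2: "\<And>s. s \<in> {0<..T} \<Longrightarrow> (u1 has_vector_derivative u2 s) (at s within {0..T})"
    and d3: "\<And>s. s \<in> {0<..T} \<Longrightarrow> (u2 has_vector_derivative u3 s) (at s within {0..T})"
    and reg: "\<And>s. s \<in> {0<..T} \<Longrightarrow>
               s * norm (u1 s) + s\<^sup>2 * norm (u2 s) + s ^ 3 * norm (u3 s) \<le> M * s powr \<sigma>"
  shows "\<exists>C::real. \<forall>(N::nat) (uh::real \<Rightarrow> 'a) (n::nat).
           N \<ge> 1 \<longrightarrow> is_avg_interp u (mesh T \<gamma> N) N uh \<longrightarrow> n \<in> {1..N} \<longrightarrow>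
           norm (u (mesh T \<gamma> N n) - uh (mesh T \<gamma> N n))
             \<le> (SUP s\<in>{mesh T \<gamma> N (n-1) <..< mesh T \<gamma> N n}. norm (u s - uh s)) \<and>
           (SUP s\<in>{mesh T \<gamma> N (n-1) <..< mesh T \<gamma> N n}. norm (u s - uh s))
             \<le> C * (if \<gamma> = 2 / \<sigma>
                     then (tstep T \<gamma> N)\<^sup>2 * (1 + ln (mesh T \<gamma> N n / mesh T \<gamma> N 1))
                     else tstep T \<gamma> N powr (min (\<gamma> * \<sigma>) 2)
                          * mesh T \<gamma> N n powr (max 0 (\<sigma> - 2 / \<gamma>)))"
proof -
  interpret S: setting u u1 u2 u3 T \<sigma> \<gamma> M
    by unfold_locales (fact T sigma gamma cont d1 d2 d3 reg)+
  show ?thesis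
  proof (intro exI[of _ S.Cfin] allI impI)
    fix N :: nat and uh :: "real \<Rightarrow> 'a" and n :: nat
    assume N1: "N \<ge> 1" and I: "is_avg_interp u (mesh T \<gamma> N) N uh" and n: "n \<in> {1..N}"
    interpret M: mesh_setting u u1 u2 u3 T \<sigma> \<gamma> M N uh
      by unfold_locales (fact N1 I)+
    define a where "a = mesh T \<gamma> N (n-1)"
    define b where "b = mesh T \<gamma> N n"
    define B where "B = S.Cfin * (if \<gamma> = 2 / \<sigma>
                     then (tstep T \<gamma> N)\<^sup>2 * (1 + ln (mesh T \<gamma> N n / mesh T \<gamma> N 1))
                     else tstep T \<gamma> N powr (min (\<gamma> * \<sigma>) 2)
                          * mesh T \<gamma> N n powr (max 0 (\<sigma> - 2 / \<gamma>)))"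
    define g where "g s = norm (u s - uh s)" for s
    have ab: "a < b" using M.h_pos[of n] n by (simp add: a_def b_def)
    have bnd: "g s \<le> B" if "s \<in> {a<..<b}" for s
    proof -
      have "g s \<le> S.Cfin * (M.tau powr S.p * Phi (S.p - 2) n)"
        unfolding g_def by (rule M.psi_bound[OF n]) (use that in \<open>auto simp: a_def b_def\<close>)
      also have "\<dots> \<le> B" unfolding B_def
        by (rule mult_left_mono[OF M.target[OF n] S.consts_nonneg(10)])
      finally show ?thesis .
    qed
    have ne: "{a<..<b} \<noteq> {}" using ab by simp
    have bdd: "bdd_above (g ` {a<..<b})" by (rule bdd_aboveI2[where M = B]) (rule bnd)
    have sup: "(SUP s\<in>{a<..<b}. g s) \<le> B" by (rule cSUP_least[OF ne bnd])
    have cg: "continuous_on {a..b} g"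
    proof -
      have sub: "{a..b} \<subseteq> {0..T}" using M.t_le_T[of n] n M.t_le[of 0 "n-1"] M.t_0
        by (auto simp: a_def b_def)
      have "continuous_on {a..b} (\<lambda>s. u s - uh s)"
        by (rule continuous_on_diff[OF continuous_on_subset[OF cont sub] continuous_on_subset[OF M.uh_cont sub]])
      then show ?thesis unfolding g_def by (rule continuous_on_norm)
    qed
    have ep: "g b \<le> (SUP s\<in>{a<..<b}. g s)"
      by (rule endpoint_le[OF ab cg]) (rule cSUP_upper[OF _ bdd])
    show "norm (u (mesh T \<gamma> N n) - uh (mesh T \<gamma> N n))
             \<le> (SUP s\<in>{mesh T \<gamma> N (n-1) <..< mesh T \<gamma> N n}. norm (u s - uh s)) \<and>
           (SUP s\<in>{mesh T \<gamma> N (n-1) <..< mesh T \<gamma> N n}. norm (u s - uh s))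
             \<le> S.Cfin * (if \<gamma> = 2 / \<sigma>
                     then (tstep T \<gamma> N)\<^sup>2 * (1 + ln (mesh T \<gamma> N n / mesh T \<gamma> N 1))
                     else tstep T \<gamma> N powr (min (\<gamma> * \<sigma>) 2)
                          * mesh T \<gamma> N n powr (max 0 (\<sigma> - 2 / \<gamma>)))"
      using ep sup unfolding g_def a_def b_def B_def by simp
  qed
qed

end
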